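(* Let $f$ be any morphism in $\mathbf{Gpd}^{\mathbf{G}}$. Then $f$ is a pullback of $p_\Delta:\widetilde{U}_\Delta\to U_\Delta$ if and only if the underlying functor of groupoids of $f$ is a discrete fibration in $\mathbf{Gpd}$ whose (discrete) fibers have $\kappa$-small sets of objects.
   Context: $\mathbf{Gpd}^{\mathbf{G}}$ is the category of groupoids equipped with an involution and functors commuting with the involutions. $\kappa$ is an inaccessible cardinal. A discrete fibration in $\mathbf{Gpd}$ is a functor $f$ such that for every isomorphism $h:f(x)\to y$ there is a unique morphism $\tilde h$ with domain $x$ and $f(\tilde h)=h$. The groupoid $U_\Delta$ has objects $(A_0,A_1,\varphi)$ with $A_0,A_1$ sets of cardinality $<\kappa$ (viewed as discrete groupoids) and $\varphi:A_0\to A_1$ a bijection; a morphism $(A_0,A_1,\varphi)\to(B_0,B_1,\psi)$ is a pair of bijections $(\rho_0:A_0\to B_0,\rho_1:A_1\to B_1)$ with $\psi\rho_0=\rho_1\varphi$; the involution is $(A_0,A_1,\varphi)\mapsto(A_1,A_0,\varphi^{-1})$, $(\rho_0,\rho_1)\mapsto(\rho_1,\rho_0)$. The groupoid $\widetilde{U}_\Delta$ has objects $(A_0,A_1,a,\varphi)$ with $(A_0,A_1,\varphi)$ as before and $a\in A_0$; morphisms $(A_0,A_1,a,\varphi)\to(B_0,B_1,b,\psi)$ are morphisms $(\rho_0,\rho_1)$ of $U_\Delta$ with $\rho_0(a)=b$; the involution is $(A_0,A_1,a,\varphi)\mapsto(A_1,A_0,\varphi(a),\varphi^{-1})$, $(\rho_0,\rho_1)\mapsto(\rho_1,\rho_0)$.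 The morphism $p_\Delta$ forgets the point $a$. *)

theory Defs
  imports Main "HOL-Library.FuncSet"
begin

unbundle cardinal_syntax

definition inaccessible :: "'k rel \<Rightarrow> bool" where
  "inaccessible \<kappa> \<longleftrightarrow> Card_order \<kappa> \<and> natLeq <o \<kappa> \<and> regularCard \<kappa> \<and>
     (\<forall>X. X \<subseteq> Field \<kappa> \<longrightarrow> |X| <o \<kappa> \<longrightarrow> |Pow X| <o \<kappa>)"

record ('o, 'a) gpd =
  Ob   :: "'o set"
  Ar   :: "'a set"
  Dom  :: "'a \<Rightarrow> 'o"
  Cod  :: "'a \<Rightarrow> 'o"
  Idt  :: "'o \<Rightarrow> 'a"
  Comp :: "'a \<Rightarrow> 'a \<Rightarrow> 'a"   \<comment> \<open>Comp g f = g after f\<close>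

definition is_gpd :: "('o, 'a, 'x) gpd_scheme \<Rightarrow> bool" where
  "is_gpd C \<longleftrightarrow>
     (\<forall>f\<in>Ar C. Dom C f \<in> Ob C \<and> Cod C f \<in> Ob C) \<and>
     (\<forall>x\<in>Ob C. Idt C x \<in> Ar C \<and> Dom C (Idt C x) = x \<and> Cod C (Idt C x) = x) \<and>
     (\<forall>f\<in>Ar C. \<forall>g\<in>Ar C. Cod C f = Dom C g \<longrightarrow>
        Comp C g f \<in> Ar C \<and> Dom C (Comp C g f) = Dom C f \<and> Cod C (Comp C g f) = Cod C g) \<and>
     (\<forall>f\<in>Ar C. \<forall>g\<in>Ar C. \<forall>h\<in>Ar C. Cod C f = Dom C g \<longrightarrow> Cod C g = Dom C h \<longrightarrow>
        Comp C h (Comp C g f) = Comp C (Comp C h g) f) \<and>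
     (\<forall>f\<in>Ar C. Comp C f (Idt C (Dom C f)) = f \<and> Comp C (Idt C (Cod C f)) f = f) \<and>
     (\<forall>f\<in>Ar C. \<exists>g\<in>Ar C. Dom C g = Cod C f \<and> Cod C g = Dom C f \<and>
        Comp C g f = Idt C (Dom C f) \<and> Comp C f g = Idt C (Cod C f))"

record ('o1, 'a1, 'o2, 'a2) fnctr =
  fo :: "'o1 \<Rightarrow> 'o2"
  fa :: "'a1 \<Rightarrow> 'a2"

definition is_functor ::
  "('o1, 'a1, 'x) gpd_scheme \<Rightarrow> ('o2, 'a2, 'y) gpd_scheme \<Rightarrow> ('o1, 'a1, 'o2, 'a2) fnctr \<Rightarrow> bool" where
  "is_functor C D F \<longleftrightarrow>
     (\<forall>x\<in>Ob C. fo F x \<in> Ob D) \<and>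
     (\<forall>f\<in>Ar C. fa F f \<in> Ar D \<and> Dom D (fa F f) = fo F (Dom C f) \<and> Cod D (fa F f) = fo F (Cod C f)) \<and>
     (\<forall>x\<in>Ob C. fa F (Idt C x) = Idt D (fo F x)) \<and>
     (\<forall>f\<in>Ar C. \<forall>g\<in>Ar C. Cod C f = Dom C g \<longrightarrow> fa F (Comp C g f) = Comp D (fa F g) (fa F f))"

text \<open>Groupoid equipped with a (strict) involution, i.e. an action of the group with two elements.\<close>
record ('o, 'a) gpdG = "('o, 'a) gpd" +
  invo :: "'o \<Rightarrow> 'o"
  inva :: "'a \<Rightarrow> 'a"

definition inv_fnctr :: "('o, 'a, 'x) gpdG_scheme \<Rightarrow> ('o, 'a, 'o, 'a) fnctr" where
  "inv_fnctr C = \<lparr>fo = invo C, fa = inva C\<rparr>"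

definition is_gpdG :: "('o, 'a, 'x) gpdG_scheme \<Rightarrow> bool" where
  "is_gpdG C \<longleftrightarrow> is_gpd C \<and> is_functor C C (inv_fnctr C) \<and>
     (\<forall>x\<in>Ob C. invo C (invo C x) = x) \<and> (\<forall>f\<in>Ar C. inva C (inva C f) = f)"

definition is_morG ::
  "('o1, 'a1, 'x) gpdG_scheme \<Rightarrow> ('o2, 'a2, 'y) gpdG_scheme \<Rightarrow> ('o1, 'a1, 'o2, 'a2) fnctr \<Rightarrow> bool" where
  "is_morG C D F \<longleftrightarrow> is_gpdG C \<and> is_gpdG D \<and> is_functor C D F \<and>
     (\<forall>x\<in>Ob C. fo F (invo C x) = invo D (fo F x)) \<and>
     (\<forall>f\<in>Ar C. fa F (inva C f) = inva D (fa F f))"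

definition comp_fnctr ::
  "('o2, 'a2, 'o3, 'a3) fnctr \<Rightarrow> ('o1, 'a1, 'o2, 'a2) fnctr \<Rightarrow> ('o1, 'a1, 'o3, 'a3) fnctr" where
  "comp_fnctr G F = \<lparr>fo = fo G \<circ> fo F, fa = fa G \<circ> fa F\<rparr>"

definition is_isoG ::
  "('o1, 'a1, 'x) gpdG_scheme \<Rightarrow> ('o2, 'a2, 'y) gpdG_scheme \<Rightarrow> ('o1, 'a1, 'o2, 'a2) fnctr \<Rightarrow> bool" where
  "is_isoG C D F \<longleftrightarrow> is_morG C D F \<and>
     (\<exists>K. is_morG D C K \<and>
        (\<forall>x\<in>Ob C. fo K (fo F x) = x) \<and> (\<forall>f\<in>Ar C. fa K (fa F f) = f) \<and>
        (\<forall>y\<in>Ob D. fo F (fo K y) = y) \<and> (\<forall>g\<in>Ar D. fa F (fa K g) = g))"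

definition pb_obj ::
  "('bo, 'ba, 'x) gpdG_scheme \<Rightarrow> ('yo, 'ya, 'y) gpdG_scheme \<Rightarrow>
   ('bo, 'ba, 'zo, 'za) fnctr \<Rightarrow> ('yo, 'ya, 'zo, 'za) fnctr \<Rightarrow> ('bo \<times> 'yo, 'ba \<times> 'ya) gpdG" where
  "pb_obj B Y G P = \<lparr>
     Ob = {(b, y). b \<in> Ob B \<and> y \<in> Ob Y \<and> fo G b = fo P y},
     Ar = {(u, v). u \<in> Ar B \<and> v \<in> Ar Y \<and> fa G u = fa P v},
     Dom = (\<lambda>(u, v). (Dom B u, Dom Y v)),
     Cod = (\<lambda>(u, v). (Cod B u, Cod Y v)),
     Idt = (\<lambda>(b, y). (Idt B b, Idt Y y)),
     Comp = (\<lambda>(u', v') (u, v). (Comp B u' u, Comp Y v' v)),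
     invo = (\<lambda>(b, y). (invo B b, invo Y y)),
     inva = (\<lambda>(u, v). (inva B u, inva Y v)) \<rparr>"

definition is_pullback_square ::
  "('eo, 'ea, 'w) gpdG_scheme \<Rightarrow> ('bo, 'ba, 'x) gpdG_scheme \<Rightarrow>
   ('yo, 'ya, 'y) gpdG_scheme \<Rightarrow> ('zo, 'za, 'z) gpdG_scheme \<Rightarrow>
   ('eo, 'ea, 'bo, 'ba) fnctr \<Rightarrow> ('eo, 'ea, 'yo, 'ya) fnctr \<Rightarrow>
   ('yo, 'ya, 'zo, 'za) fnctr \<Rightarrow> ('bo, 'ba, 'zo, 'za) fnctr \<Rightarrow> bool" where
  "is_pullback_square E B Y Z F H P G \<longleftrightarrow>
     is_morG E B F \<and> is_morG E Y H \<and> is_morG Y Z P \<and> is_morG B Z G \<and>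
     (\<forall>x\<in>Ob E. fo P (fo H x) = fo G (fo F x)) \<and>
     (\<forall>f\<in>Ar E. fa P (fa H f) = fa G (fa F f)) \<and>
     is_isoG E (pb_obj B Y G P) \<lparr>fo = (\<lambda>x. (fo F x, fo H x)), fa = (\<lambda>f. (fa F f, fa H f))\<rparr>"

definition is_pullback_of ::
  "('eo, 'ea, 'w) gpdG_scheme \<Rightarrow> ('bo, 'ba, 'x) gpdG_scheme \<Rightarrow> ('eo, 'ea, 'bo, 'ba) fnctr \<Rightarrow>
   ('yo, 'ya, 'y) gpdG_scheme \<Rightarrow> ('zo, 'za, 'z) gpdG_scheme \<Rightarrow> ('yo, 'ya, 'zo, 'za) fnctr \<Rightarrow> bool" where
  "is_pullback_of E B F Y Z P \<longleftrightarrow>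
     (\<exists>G H. is_pullback_square E B Y Z F H P G)"

definition discrete_fibration ::
  "('eo, 'ea, 'x) gpd_scheme \<Rightarrow> ('bo, 'ba, 'y) gpd_scheme \<Rightarrow> ('eo, 'ea, 'bo, 'ba) fnctr \<Rightarrow> bool" where
  "discrete_fibration E B F \<longleftrightarrow> is_functor E B F \<and>
     (\<forall>x\<in>Ob E. \<forall>h\<in>Ar B. Dom B h = fo F x \<longrightarrow>
        (\<exists>!h'. h' \<in> Ar E \<and> Dom E h' = x \<and> fa F h' = h))"

definition fiber_obj ::
  "('eo, 'ea, 'x) gpd_scheme \<Rightarrow> ('eo, 'ea, 'bo, 'ba) fnctr \<Rightarrow> 'bo \<Rightarrow> 'eo set" where
  "fiber_obj E F b = {x \<in> Ob E. fo F x = b}"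

text \<open>Sets are subsets of the type \<open>'u\<close>; \<open>\<kappa>\<close> is a cardinal on (a subset of) \<open>'u\<close>,
  so \<open>'u\<close> has at least \<open>\<kappa>\<close> elements. Bijections are represented by extensional functions.\<close>

type_synonym 'u UDob = "'u set \<times> 'u set \<times> ('u \<Rightarrow> 'u)"
type_synonym 'u UDar = "'u UDob \<times> 'u UDob \<times> ('u \<Rightarrow> 'u) \<times> ('u \<Rightarrow> 'u)"
type_synonym 'u UDtob = "'u set \<times> 'u set \<times> 'u \<times> ('u \<Rightarrow> 'u)"
type_synonym 'u UDtar = "'u UDtob \<times> 'u UDtob \<times> ('u \<Rightarrow> 'u) \<times> ('u \<Rightarrow> 'u)"

definition ext_bij :: "('u \<Rightarrow> 'u) \<Rightarrow> 'u set \<Rightarrow> 'u set \<Rightarrow> bool" where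
  "ext_bij \<phi> A B \<longleftrightarrow> bij_betw \<phi> A B \<and> \<phi> \<in> extensional A"

definition ext_inv :: "('u \<Rightarrow> 'u) \<Rightarrow> 'u set \<Rightarrow> 'u set \<Rightarrow> ('u \<Rightarrow> 'u)" where
  "ext_inv \<phi> A B = restrict (inv_into A \<phi>) B"

definition UD_objs :: "'u rel \<Rightarrow> 'u UDob set" where
  "UD_objs \<kappa> = {(A0, A1, \<phi>). |A0| <o \<kappa> \<and> |A1| <o \<kappa> \<and> ext_bij \<phi> A0 A1}"

definition U_Delta :: "'u rel \<Rightarrow> ('u UDob, 'u UDar) gpdG" where
  "U_Delta \<kappa> = \<lparr>
     Ob = UD_objs \<kappa>,
     Ar = {((A0, A1, \<phi>), (B0, B1, \<psi>), \<rho>0, \<rho>1).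
             (A0, A1, \<phi>) \<in> UD_objs \<kappa> \<and> (B0, B1, \<psi>) \<in> UD_objs \<kappa> \<and>
             ext_bij \<rho>0 A0 B0 \<and> ext_bij \<rho>1 A1 B1 \<and>
             (\<forall>a\<in>A0. \<psi> (\<rho>0 a) = \<rho>1 (\<phi> a))},
     Dom = (\<lambda>(s, t, \<rho>0, \<rho>1). s),
     Cod = (\<lambda>(s, t, \<rho>0, \<rho>1). t),
     Idt = (\<lambda>(A0, A1, \<phi>). ((A0, A1, \<phi>), (A0, A1, \<phi>), restrict id A0, restrict id A1)),
     Comp = (\<lambda>(s', t', \<sigma>0, \<sigma>1) (s, t, \<rho>0, \<rho>1).
               (s, t', compose (fst s) \<sigma>0 \<rho>0, compose (fst (snd s)) \<sigma>1 \<rho>1)),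
     invo = (\<lambda>(A0, A1, \<phi>). (A1, A0, ext_inv \<phi> A0 A1)),
     inva = (\<lambda>((A0, A1, \<phi>), (B0, B1, \<psi>), \<rho>0, \<rho>1).
               ((A1, A0, ext_inv \<phi> A0 A1), (B1, B0, ext_inv \<psi> B0 B1), \<rho>1, \<rho>0)) \<rparr>"

definition UDt_objs :: "'u rel \<Rightarrow> 'u UDtob set" where
  "UDt_objs \<kappa> = {(A0, A1, a, \<phi>). (A0, A1, \<phi>) \<in> UD_objs \<kappa> \<and> a \<in> A0}"

definition U_Delta_tilde :: "'u rel \<Rightarrow> ('u UDtob, 'u UDtar) gpdG" where
  "U_Delta_tilde \<kappa> = \<lparr>
     Ob = UDt_objs \<kappa>,
     Ar = {((A0, A1, a, \<phi>), (B0, B1, b, \<psi>), \<rho>0, \<rho>1).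
             (A0, A1, a, \<phi>) \<in> UDt_objs \<kappa> \<and> (B0, B1, b, \<psi>) \<in> UDt_objs \<kappa> \<and>
             ext_bij \<rho>0 A0 B0 \<and> ext_bij \<rho>1 A1 B1 \<and>
             (\<forall>x\<in>A0. \<psi> (\<rho>0 x) = \<rho>1 (\<phi> x)) \<and> \<rho>0 a = b},
     Dom = (\<lambda>(s, t, \<rho>0, \<rho>1). s),
     Cod = (\<lambda>(s, t, \<rho>0, \<rho>1). t),
     Idt = (\<lambda>(A0, A1, a, \<phi>). ((A0, A1, a, \<phi>), (A0, A1, a, \<phi>), restrict id A0, restrict id A1)),
     Comp = (\<lambda>(s', t', \<sigma>0, \<sigma>1) (s, t, \<rho>0, \<rho>1).
               (s, t', compose (fst s) \<sigma>0 \<rho>0, compose (fst (snd s)) \<sigma>1 \<rho>1)),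
     invo = (\<lambda>(A0, A1, a, \<phi>). (A1, A0, \<phi> a, ext_inv \<phi> A0 A1)),
     inva = (\<lambda>((A0, A1, a, \<phi>), (B0, B1, b, \<psi>), \<rho>0, \<rho>1).
               ((A1, A0, \<phi> a, ext_inv \<phi> A0 A1), (B1, B0, \<psi> b, ext_inv \<psi> B0 B1), \<rho>1, \<rho>0)) \<rparr>"

definition p_Delta :: "('u UDtob, 'u UDtar, 'u UDob, 'u UDar) fnctr" where
  "p_Delta = \<lparr>
     fo = (\<lambda>(A0, A1, a, \<phi>). (A0, A1, \<phi>)),
     fa = (\<lambda>((A0, A1, a, \<phi>), (B0, B1, b, \<psi>), \<rho>0, \<rho>1). ((A0, A1, \<phi>), (B0, B1, \<psi>), \<rho>0, \<rho>1)) \<rparr>"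

end

theory Submission
  imports Defs
begin


lemma EB_id: "ext_bij (restrict id A) A A"
  unfolding ext_bij_def by (auto simp: bij_betw_def inj_on_def)

lemma EB_comp: "ext_bij \<rho> A B \<Longrightarrow> ext_bij \<sigma> B C \<Longrightarrow> ext_bij (compose A \<sigma> \<rho>) A C"
proof -
  assume a: "ext_bij \<rho> A B" "ext_bij \<sigma> B C"
  have "bij_betw (\<sigma> \<circ> \<rho>) A C" using a unfolding ext_bij_def using bij_betw_trans by blast
  then have "bij_betw (compose A \<sigma> \<rho>) A C" by (rule bij_betw_cong[THEN iffD1, rotated]) (simp add: compose_def)
  then show ?thesis unfolding ext_bij_def by (simp add: compose_def)
qed

lemma EB_inv: "ext_bij \<phi> A B \<Longrightarrow> ext_bij (ext_inv \<phi> A B) B A"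
proof -
  assume a: "ext_bij \<phi> A B"
  have "bij_betw (inv_into A \<phi>) B A" using a unfolding ext_bij_def by (simp add: bij_betw_inv_into)
  then have "bij_betw (restrict (inv_into A \<phi>) B) B A" by (rule bij_betw_cong[THEN iffD1, rotated]) simp
  then show ?thesis unfolding ext_bij_def ext_inv_def by simp
qed

lemma EB_inv_app1: "ext_bij \<phi> A B \<Longrightarrow> a \<in> A \<Longrightarrow> ext_inv \<phi> A B (\<phi> a) = a"
  unfolding ext_bij_def ext_inv_def bij_betw_def
  by (auto simp: inv_into_f_f)

lemma EB_inv_app2: "ext_bij \<phi> A B \<Longrightarrow> b \<in> B \<Longrightarrow> \<phi> (ext_inv \<phi> A B b) = b"
  unfolding ext_bij_def ext_inv_def bij_betw_def
  by (auto simp: f_inv_into_f)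

lemma EB_inv_mem: "ext_bij \<phi> A B \<Longrightarrow> b \<in> B \<Longrightarrow> ext_inv \<phi> A B b \<in> A"
  unfolding ext_bij_def ext_inv_def bij_betw_def
  by (auto simp: inv_into_into)

lemma EB_mem: "ext_bij \<phi> A B \<Longrightarrow> a \<in> A \<Longrightarrow> \<phi> a \<in> B"
  unfolding ext_bij_def bij_betw_def by auto

lemma EB_inj: "ext_bij \<phi> A B \<Longrightarrow> a \<in> A \<Longrightarrow> a' \<in> A \<Longrightarrow> \<phi> a = \<phi> a' \<Longrightarrow> a = a'"
  unfolding ext_bij_def bij_betw_def by (auto simp: inj_on_def)

lemma EB_inv_unique:
  assumes "ext_bij \<phi> A B" "\<psi> \<in> extensional B" "\<And>a. a \<in> A \<Longrightarrow> \<psi> (\<phi> a) = a"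
  shows "ext_inv \<phi> A B = \<psi>"
proof (rule extensionalityI[of _ B])
  show "ext_inv \<phi> A B \<in> extensional B" unfolding ext_inv_def by simp
  show "\<psi> \<in> extensional B" by fact
  fix b assume b: "b \<in> B"
  have "ext_inv \<phi> A B b \<in> A" using EB_inv_mem[OF assms(1) b] .
  then have "\<psi> (\<phi> (ext_inv \<phi> A B b)) = ext_inv \<phi> A B b" using assms(3) by blast
  then show "ext_inv \<phi> A B b = \<psi> b" using EB_inv_app2[OF assms(1) b] by simp
qed

lemma EB_inv_inv: "ext_bij \<phi> A B \<Longrightarrow> ext_inv (ext_inv \<phi> A B) B A = \<phi>"
  apply (rule EB_inv_unique)
    apply (erule EB_inv)
   apply (simp add: ext_bij_def)
  by (simp add: EB_inv_app2)

lemma EB_ext: "ext_bij \<phi> A B \<Longrightarrow> \<phi> \<in> extensional A"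
  by (simp add: ext_bij_def)

lemma compose_id_right: "\<rho> \<in> extensional A \<Longrightarrow> compose A \<rho> (restrict id A) = \<rho>"
  by (rule extensionalityI[of _ A]) (auto simp: compose_def)

lemma compose_id_left: "\<rho> \<in> extensional A \<Longrightarrow> \<rho> ` A \<subseteq> B \<Longrightarrow> compose A (restrict id B) \<rho> = \<rho>"
  by (rule extensionalityI[of _ A]) (auto simp: compose_def)

lemma EB_id_left: "ext_bij \<rho> A B \<Longrightarrow> compose A (restrict id B) \<rho> = \<rho>"
  by (rule compose_id_left) (auto simp: EB_ext EB_mem)

lemma EB_id_right: "ext_bij \<rho> A B \<Longrightarrow> compose A \<rho> (restrict id A) = \<rho>"
  by (rule compose_id_right) (auto simp: EB_ext)

lemma EB_compose_inv1: "ext_bij \<phi> A B \<Longrightarrow> compose A (ext_inv \<phi> A B) \<phi> = restrict id A"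
  by (rule extensionalityI[of _ A]) (auto simp: compose_def EB_inv_app1)

lemma EB_compose_inv2: "ext_bij \<phi> A B \<Longrightarrow> compose B \<phi> (ext_inv \<phi> A B) = restrict id B"
  by (rule extensionalityI[of _ B]) (auto simp: compose_def EB_inv_app2)

lemma EB_funcset: "ext_bij \<phi> A B \<Longrightarrow> \<phi> \<in> A \<rightarrow> B"
  by (auto simp: EB_mem)



lemma UD_objs_iff: "(A0, A1, \<phi>) \<in> UD_objs \<kappa> \<longleftrightarrow> |A0| <o \<kappa> \<and> |A1| <o \<kappa> \<and> ext_bij \<phi> A0 A1"
  by (simp add: UD_objs_def)

lemma UD_objs_invo: "(A0, A1, \<phi>) \<in> UD_objs \<kappa> \<Longrightarrow> (A1, A0, ext_inv \<phi> A0 A1) \<in> UD_objs \<kappa>"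
  by (simp add: UD_objs_def EB_inv)

lemma U_Ar_iff: "((A0,A1,\<phi>),(B0,B1,\<psi>),\<rho>0,\<rho>1) \<in> Ar (U_Delta \<kappa>) \<longleftrightarrow>
   (A0,A1,\<phi>) \<in> UD_objs \<kappa> \<and> (B0,B1,\<psi>) \<in> UD_objs \<kappa> \<and> ext_bij \<rho>0 A0 B0 \<and> ext_bij \<rho>1 A1 B1 \<and>
   (\<forall>a\<in>A0. \<psi> (\<rho>0 a) = \<rho>1 (\<phi> a))"
  by (simp add: U_Delta_def)

lemma U_Ar_cases:
  assumes "f \<in> Ar (U_Delta \<kappa>)"
  obtains A0 A1 \<phi> B0 B1 \<psi> \<rho>0 \<rho>1 where "f = ((A0,A1,\<phi>),(B0,B1,\<psi>),\<rho>0,\<rho>1)"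
    "(A0,A1,\<phi>) \<in> UD_objs \<kappa>" "(B0,B1,\<psi>) \<in> UD_objs \<kappa>" "ext_bij \<rho>0 A0 B0" "ext_bij \<rho>1 A1 B1"
    "\<forall>a\<in>A0. \<psi> (\<rho>0 a) = \<rho>1 (\<phi> a)"
  using assms by (cases f) (auto simp: U_Delta_def)

lemma U_Ob_cases:
  assumes "x \<in> Ob (U_Delta \<kappa>)"
  obtains A0 A1 \<phi> where "x = (A0,A1,\<phi>)" "|A0| <o \<kappa>" "|A1| <o \<kappa>" "ext_bij \<phi> A0 A1"
  using assms by (cases x) (auto simp: U_Delta_def UD_objs_def)

lemma U_simps:
  "Ob (U_Delta \<kappa>) = UD_objs \<kappa>"
  "Dom (U_Delta \<kappa>) (s, t, \<rho>0, \<rho>1) = s"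
  "Cod (U_Delta \<kappa>) (s, t, \<rho>0, \<rho>1) = t"
  "Idt (U_Delta \<kappa>) (A0, A1, \<phi>) = ((A0, A1, \<phi>), (A0, A1, \<phi>), restrict id A0, restrict id A1)"
  "Comp (U_Delta \<kappa>) (s', t', \<sigma>0, \<sigma>1) ((A0,A1,\<phi>), t, \<rho>0, \<rho>1) =
     ((A0,A1,\<phi>), t', compose A0 \<sigma>0 \<rho>0, compose A1 \<sigma>1 \<rho>1)"
  "invo (U_Delta \<kappa>) (A0, A1, \<phi>) = (A1, A0, ext_inv \<phi> A0 A1)"
  "inva (U_Delta \<kappa>) ((A0, A1, \<phi>), (B0, B1, \<psi>), \<rho>0, \<rho>1) =
     ((A1, A0, ext_inv \<phi> A0 A1), (B1, B0, ext_inv \<psi> B0 B1), \<rho>1, \<rho>0)"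
  by (simp_all add: U_Delta_def)

lemma is_gpd_intro:
  assumes "\<And>f. f \<in> Ar C \<Longrightarrow> Dom C f \<in> Ob C \<and> Cod C f \<in> Ob C"
    "\<And>x. x \<in> Ob C \<Longrightarrow> Idt C x \<in> Ar C \<and> Dom C (Idt C x) = x \<and> Cod C (Idt C x) = x"
    "\<And>f g. f \<in> Ar C \<Longrightarrow> g \<in> Ar C \<Longrightarrow> Cod C f = Dom C g \<Longrightarrow>
        Comp C g f \<in> Ar C \<and> Dom C (Comp C g f) = Dom C f \<and> Cod C (Comp C g f) = Cod C g"
    "\<And>f g h. f \<in> Ar C \<Longrightarrow> g \<in> Ar C \<Longrightarrow> h \<in> Ar C \<Longrightarrow> Cod C f = Dom C g \<Longrightarrow> Cod C g = Dom C h \<Longrightarrow>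
        Comp C h (Comp C g f) = Comp C (Comp C h g) f"
    "\<And>f. f \<in> Ar C \<Longrightarrow> Comp C f (Idt C (Dom C f)) = f \<and> Comp C (Idt C (Cod C f)) f = f"
    "\<And>f. f \<in> Ar C \<Longrightarrow> \<exists>g\<in>Ar C. Dom C g = Cod C f \<and> Cod C g = Dom C f \<and>
        Comp C g f = Idt C (Dom C f) \<and> Comp C f g = Idt C (Cod C f)"
  shows "is_gpd C"
  unfolding is_gpd_def using assms by blast

lemma U_is_gpd: "is_gpd (U_Delta \<kappa>)"
proof (rule is_gpd_intro)
  fix f assume "f \<in> Ar (U_Delta \<kappa>)"
  then show "Dom (U_Delta \<kappa>) f \<in> Ob (U_Delta \<kappa>) \<and> Cod (U_Delta \<kappa>) f \<in> Ob (U_Delta \<kappa>)"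
    by (cases rule: U_Ar_cases) (simp add: U_simps)
next
  fix x assume "x \<in> Ob (U_Delta \<kappa>)"
  then show "Idt (U_Delta \<kappa>) x \<in> Ar (U_Delta \<kappa>) \<and> Dom (U_Delta \<kappa>) (Idt (U_Delta \<kappa>) x) = x \<and>
      Cod (U_Delta \<kappa>) (Idt (U_Delta \<kappa>) x) = x"
    by (cases rule: U_Ob_cases) (auto simp: U_simps U_Ar_iff UD_objs_iff EB_id EB_mem)
next
  fix f g assume f: "f \<in> Ar (U_Delta \<kappa>)" and g: "g \<in> Ar (U_Delta \<kappa>)"
    and fg: "Cod (U_Delta \<kappa>) f = Dom (U_Delta \<kappa>) g"
  from f obtain A0 A1 \<phi> B0 B1 \<psi> \<rho>0 \<rho>1 where f': "f = ((A0,A1,\<phi>),(B0,B1,\<psi>),\<rho>0,\<rho>1)"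
    "(A0,A1,\<phi>) \<in> UD_objs \<kappa>" "(B0,B1,\<psi>) \<in> UD_objs \<kappa>" "ext_bij \<rho>0 A0 B0" "ext_bij \<rho>1 A1 B1"
    "\<forall>a\<in>A0. \<psi> (\<rho>0 a) = \<rho>1 (\<phi> a)" by (rule U_Ar_cases)
  from g obtain C0 C1 \<chi> D0 D1 \<omega> \<sigma>0 \<sigma>1 where g': "g = ((C0,C1,\<chi>),(D0,D1,\<omega>),\<sigma>0,\<sigma>1)"
    "(C0,C1,\<chi>) \<in> UD_objs \<kappa>" "(D0,D1,\<omega>) \<in> UD_objs \<kappa>" "ext_bij \<sigma>0 C0 D0" "ext_bij \<sigma>1 C1 D1"
    "\<forall>a\<in>C0. \<omega> (\<sigma>0 a) = \<sigma>1 (\<chi> a)" by (rule U_Ar_cases)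
  from fg have e: "C0 = B0" "C1 = B1" "\<chi> = \<psi>" by (simp_all add: f' g' U_simps)
  have "\<forall>a\<in>A0. \<omega> (compose A0 \<sigma>0 \<rho>0 a) = compose A1 \<sigma>1 \<rho>1 (\<phi> a)"
  proof
    fix a assume a: "a \<in> A0"
    have "\<phi> a \<in> A1" using f'(2) a using EB_mem by (auto simp add: UD_objs_iff)
    moreover have "\<rho>0 a \<in> B0" using f'(4) a by (simp add: EB_mem)
    ultimately show "\<omega> (compose A0 \<sigma>0 \<rho>0 a) = compose A1 \<sigma>1 \<rho>1 (\<phi> a)"
      using a f'(6) g'(6) e by (simp add: compose_def)
  qed
  then show "Comp (U_Delta \<kappa>) g f \<in> Ar (U_Delta \<kappa>) \<and> Dom (U_Delta \<kappa>) (Comp (U_Delta \<kappa>) g f) = Dom (U_Delta \<kappa>) f \<and>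
       Cod (U_Delta \<kappa>) (Comp (U_Delta \<kappa>) g f) = Cod (U_Delta \<kappa>) g"
    using f' g' e by (simp add: U_simps U_Ar_iff EB_comp)
next
  fix f g h assume f: "f \<in> Ar (U_Delta \<kappa>)" and g: "g \<in> Ar (U_Delta \<kappa>)" and h: "h \<in> Ar (U_Delta \<kappa>)"
    and fg: "Cod (U_Delta \<kappa>) f = Dom (U_Delta \<kappa>) g" and gh: "Cod (U_Delta \<kappa>) g = Dom (U_Delta \<kappa>) h"
  from f obtain A0 A1 \<phi> B0 B1 \<psi> \<rho>0 \<rho>1 where f': "f = ((A0,A1,\<phi>),(B0,B1,\<psi>),\<rho>0,\<rho>1)"
    "ext_bij \<rho>0 A0 B0" "ext_bij \<rho>1 A1 B1" by (rule U_Ar_cases)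
  from g obtain C0 C1 \<chi> D0 D1 \<omega> \<sigma>0 \<sigma>1 where g': "g = ((C0,C1,\<chi>),(D0,D1,\<omega>),\<sigma>0,\<sigma>1)"
    "ext_bij \<sigma>0 C0 D0" "ext_bij \<sigma>1 C1 D1" by (rule U_Ar_cases)
  from h obtain E0 E1 \<eta> F0 F1 \<theta> \<tau>0 \<tau>1 where h': "h = ((E0,E1,\<eta>),(F0,F1,\<theta>),\<tau>0,\<tau>1)"
    by (rule U_Ar_cases)
  from fg gh have e: "C0 = B0" "C1 = B1" by (simp_all add: f' g' h' U_simps)
  show "Comp (U_Delta \<kappa>) h (Comp (U_Delta \<kappa>) g f) = Comp (U_Delta \<kappa>) (Comp (U_Delta \<kappa>) h g) f"
    using f' g' h' e by (simp add: U_simps compose_assoc EB_funcset)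
next
  fix f assume f: "f \<in> Ar (U_Delta \<kappa>)"
  from f obtain A0 A1 \<phi> B0 B1 \<psi> \<rho>0 \<rho>1 where f': "f = ((A0,A1,\<phi>),(B0,B1,\<psi>),\<rho>0,\<rho>1)"
    "ext_bij \<rho>0 A0 B0" "ext_bij \<rho>1 A1 B1" by (rule U_Ar_cases)
  show "Comp (U_Delta \<kappa>) f (Idt (U_Delta \<kappa>) (Dom (U_Delta \<kappa>) f)) = f \<and>
       Comp (U_Delta \<kappa>) (Idt (U_Delta \<kappa>) (Cod (U_Delta \<kappa>) f)) f = f"
    using f' by (auto simp: U_simps EB_id_left EB_id_right)
next
  fix f assume f: "f \<in> Ar (U_Delta \<kappa>)"
  from f obtain A0 A1 \<phi> B0 B1 \<psi> \<rho>0 \<rho>1 where f': "f = ((A0,A1,\<phi>),(B0,B1,\<psi>),\<rho>0,\<rho>1)"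
    "(A0,A1,\<phi>) \<in> UD_objs \<kappa>" "(B0,B1,\<psi>) \<in> UD_objs \<kappa>" "ext_bij \<rho>0 A0 B0" "ext_bij \<rho>1 A1 B1"
    "\<forall>a\<in>A0. \<psi> (\<rho>0 a) = \<rho>1 (\<phi> a)" by (rule U_Ar_cases)
  let ?g = "((B0,B1,\<psi>),(A0,A1,\<phi>), ext_inv \<rho>0 A0 B0, ext_inv \<rho>1 A1 B1)"
  have "\<forall>b\<in>B0. \<phi> (ext_inv \<rho>0 A0 B0 b) = ext_inv \<rho>1 A1 B1 (\<psi> b)"
  proof
    fix b assume b: "b \<in> B0"
    let ?a = "ext_inv \<rho>0 A0 B0 b"
    have a: "?a \<in> A0" "\<rho>0 ?a = b" using EB_inv_mem[OF f'(4) b] EB_inv_app2[OF f'(4) b] by auto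
    have "\<phi> ?a \<in> A1" using f'(2) a using EB_mem by (auto simp add: UD_objs_iff)
    then show "\<phi> ?a = ext_inv \<rho>1 A1 B1 (\<psi> b)"
      using f'(6) a EB_inv_app1[OF f'(5)] by metis
  qed
  then have "?g \<in> Ar (U_Delta \<kappa>)" using f' by (simp add: U_Ar_iff EB_inv)
  moreover have "Comp (U_Delta \<kappa>) ?g f = Idt (U_Delta \<kappa>) (Dom (U_Delta \<kappa>) f)"
    "Comp (U_Delta \<kappa>) f ?g = Idt (U_Delta \<kappa>) (Cod (U_Delta \<kappa>) f)"
    using f' by (simp_all add: U_simps EB_compose_inv1 EB_compose_inv2)
  ultimately show "\<exists>g\<in>Ar (U_Delta \<kappa>). Dom (U_Delta \<kappa>) g = Cod (U_Delta \<kappa>) f \<and> Cod (U_Delta \<kappa>) g = Dom (U_Delta \<kappa>) f \<and>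
        Comp (U_Delta \<kappa>) g f = Idt (U_Delta \<kappa>) (Dom (U_Delta \<kappa>) f) \<and>
        Comp (U_Delta \<kappa>) f g = Idt (U_Delta \<kappa>) (Cod (U_Delta \<kappa>) f)"
    apply (intro bexI[of _ ?g])
    using f' by (simp_all add: U_simps)
qed



lemma is_functor_intro:
  assumes "\<And>x. x \<in> Ob C \<Longrightarrow> fo F x \<in> Ob D"
    "\<And>f. f \<in> Ar C \<Longrightarrow> fa F f \<in> Ar D \<and> Dom D (fa F f) = fo F (Dom C f) \<and> Cod D (fa F f) = fo F (Cod C f)"
    "\<And>x. x \<in> Ob C \<Longrightarrow> fa F (Idt C x) = Idt D (fo F x)"
    "\<And>f g. f \<in> Ar C \<Longrightarrow> g \<in> Ar C \<Longrightarrow> Cod C f = Dom C g \<Longrightarrow> fa F (Comp C g f) = Comp D (fa F g) (fa F f)"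
  shows "is_functor C D F"
  unfolding is_functor_def using assms by blast

lemma is_gpdG_intro:
  assumes "is_gpd C" "is_functor C C (inv_fnctr C)"
    "\<And>x. x \<in> Ob C \<Longrightarrow> invo C (invo C x) = x" "\<And>f. f \<in> Ar C \<Longrightarrow> inva C (inva C f) = f"
  shows "is_gpdG C"
  unfolding is_gpdG_def using assms by blast

lemma inv_fnctr_simps [simp]: "fo (inv_fnctr C) = invo C" "fa (inv_fnctr C) = inva C"
  by (simp_all add: inv_fnctr_def)

lemma U_invo_invo: "x \<in> Ob (U_Delta \<kappa>) \<Longrightarrow> invo (U_Delta \<kappa>) (invo (U_Delta \<kappa>) x) = x"
  by (erule U_Ob_cases) (simp add: U_simps EB_inv_inv)

lemma U_inva_inva: "f \<in> Ar (U_Delta \<kappa>) \<Longrightarrow> inva (U_Delta \<kappa>) (inva (U_Delta \<kappa>) f) = f"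
  by (erule U_Ar_cases) (simp add: U_simps EB_inv_inv UD_objs_iff)

lemma U_is_gpdG: "is_gpdG (U_Delta \<kappa>)"
proof (rule is_gpdG_intro[OF U_is_gpd _ U_invo_invo U_inva_inva])
  show "is_functor (U_Delta \<kappa>) (U_Delta \<kappa>) (inv_fnctr (U_Delta \<kappa>))"
  proof (rule is_functor_intro)
    fix x assume "x \<in> Ob (U_Delta \<kappa>)"
    then show "fo (inv_fnctr (U_Delta \<kappa>)) x \<in> Ob (U_Delta \<kappa>)"
      by (cases rule: U_Ob_cases) (simp add: U_simps UD_objs_iff EB_inv)
  next
    fix x assume "x \<in> Ob (U_Delta \<kappa>)"
    then show "fa (inv_fnctr (U_Delta \<kappa>)) (Idt (U_Delta \<kappa>) x) = Idt (U_Delta \<kappa>) (fo (inv_fnctr (U_Delta \<kappa>)) x)"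
      by (cases rule: U_Ob_cases) (simp add: U_simps)
  next
    fix f assume f: "f \<in> Ar (U_Delta \<kappa>)"
    from f obtain A0 A1 \<phi> B0 B1 \<psi> \<rho>0 \<rho>1 where f': "f = ((A0,A1,\<phi>),(B0,B1,\<psi>),\<rho>0,\<rho>1)"
      "(A0,A1,\<phi>) \<in> UD_objs \<kappa>" "(B0,B1,\<psi>) \<in> UD_objs \<kappa>" "ext_bij \<rho>0 A0 B0" "ext_bij \<rho>1 A1 B1"
      "\<forall>a\<in>A0. \<psi> (\<rho>0 a) = \<rho>1 (\<phi> a)" by (rule U_Ar_cases)
    have phi: "ext_bij \<phi> A0 A1" and psi: "ext_bij \<psi> B0 B1" using f' by (simp_all add: UD_objs_iff)
    have "\<forall>a\<in>A1. ext_inv \<psi> B0 B1 (\<rho>1 a) = \<rho>0 (ext_inv \<phi> A0 A1 a)"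
    proof
      fix a assume a: "a \<in> A1"
      let ?a = "ext_inv \<phi> A0 A1 a"
      have a': "?a \<in> A0" "\<phi> ?a = a" using EB_inv_mem[OF phi a] EB_inv_app2[OF phi a] by auto
      have "\<psi> (\<rho>0 ?a) = \<rho>1 a" using f'(6) a' by metis
      moreover have "\<rho>0 ?a \<in> B0" using EB_mem[OF f'(4) a'(1)] .
      ultimately show "ext_inv \<psi> B0 B1 (\<rho>1 a) = \<rho>0 ?a" using EB_inv_app1[OF psi] by metis
    qed
    then show "fa (inv_fnctr (U_Delta \<kappa>)) f \<in> Ar (U_Delta \<kappa>) \<and>
       Dom (U_Delta \<kappa>) (fa (inv_fnctr (U_Delta \<kappa>)) f) = fo (inv_fnctr (U_Delta \<kappa>)) (Dom (U_Delta \<kappa>) f) \<and>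
       Cod (U_Delta \<kappa>) (fa (inv_fnctr (U_Delta \<kappa>)) f) = fo (inv_fnctr (U_Delta \<kappa>)) (Cod (U_Delta \<kappa>) f)"
      using f' by (simp add: U_simps U_Ar_iff UD_objs_invo)
  next
    fix f g assume f: "f \<in> Ar (U_Delta \<kappa>)" and g: "g \<in> Ar (U_Delta \<kappa>)"
      and fg: "Cod (U_Delta \<kappa>) f = Dom (U_Delta \<kappa>) g"
    from f obtain A0 A1 \<phi> B0 B1 \<psi> \<rho>0 \<rho>1 where f': "f = ((A0,A1,\<phi>),(B0,B1,\<psi>),\<rho>0,\<rho>1)"
      by (rule U_Ar_cases)
    from g obtain C0 C1 \<chi> D0 D1 \<omega> \<sigma>0 \<sigma>1 where g': "g = ((C0,C1,\<chi>),(D0,D1,\<omega>),\<sigma>0,\<sigma>1)"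
      by (rule U_Ar_cases)
    from fg have e: "C0 = B0" "C1 = B1" "\<chi> = \<psi>" by (simp_all add: f' g' U_simps)
    show "fa (inv_fnctr (U_Delta \<kappa>)) (Comp (U_Delta \<kappa>) g f) =
       Comp (U_Delta \<kappa>) (fa (inv_fnctr (U_Delta \<kappa>)) g) (fa (inv_fnctr (U_Delta \<kappa>)) f)"
      using f' g' e by (simp add: U_simps)
  qed
qed



lemma UDt_objs_iff: "(A0, A1, a, \<phi>) \<in> UDt_objs \<kappa> \<longleftrightarrow> |A0| <o \<kappa> \<and> |A1| <o \<kappa> \<and> ext_bij \<phi> A0 A1 \<and> a \<in> A0"
  by (auto simp add: UDt_objs_def UD_objs_def)

lemma T_Ar_iff: "((A0,A1,a,\<phi>),(B0,B1,b,\<psi>),\<rho>0,\<rho>1) \<in> Ar (U_Delta_tilde \<kappa>) \<longleftrightarrow>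
   (A0,A1,a,\<phi>) \<in> UDt_objs \<kappa> \<and> (B0,B1,b,\<psi>) \<in> UDt_objs \<kappa> \<and> ext_bij \<rho>0 A0 B0 \<and> ext_bij \<rho>1 A1 B1 \<and>
   (\<forall>x\<in>A0. \<psi> (\<rho>0 x) = \<rho>1 (\<phi> x)) \<and> \<rho>0 a = b"
  by (simp add: U_Delta_tilde_def)

lemma T_Ar_cases:
  assumes "f \<in> Ar (U_Delta_tilde \<kappa>)"
  obtains A0 A1 a \<phi> B0 B1 b \<psi> \<rho>0 \<rho>1 where "f = ((A0,A1,a,\<phi>),(B0,B1,b,\<psi>),\<rho>0,\<rho>1)"
    "(A0,A1,a,\<phi>) \<in> UDt_objs \<kappa>" "(B0,B1,b,\<psi>) \<in> UDt_objs \<kappa>" "ext_bij \<rho>0 A0 B0" "ext_bij \<rho>1 A1 B1"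
    "\<forall>x\<in>A0. \<psi> (\<rho>0 x) = \<rho>1 (\<phi> x)" "\<rho>0 a = b"
  using assms by (cases f) (auto simp: U_Delta_tilde_def)

lemma T_Ob_cases:
  assumes "x \<in> Ob (U_Delta_tilde \<kappa>)"
  obtains A0 A1 a \<phi> where "x = (A0,A1,a,\<phi>)" "|A0| <o \<kappa>" "|A1| <o \<kappa>" "ext_bij \<phi> A0 A1" "a \<in> A0"
  using assms by (cases x) (auto simp: U_Delta_tilde_def UDt_objs_iff)

lemma T_simps:
  "Ob (U_Delta_tilde \<kappa>) = UDt_objs \<kappa>"
  "Dom (U_Delta_tilde \<kappa>) (s, t, \<rho>0, \<rho>1) = s"
  "Cod (U_Delta_tilde \<kappa>) (s, t, \<rho>0, \<rho>1) = t"
  "Idt (U_Delta_tilde \<kappa>) (A0, A1, a, \<phi>) = ((A0, A1, a, \<phi>), (A0, A1, a, \<phi>), restrict id A0, restrict id A1)"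
  "Comp (U_Delta_tilde \<kappa>) (s', t', \<sigma>0, \<sigma>1) ((A0,A1,a,\<phi>), t, \<rho>0, \<rho>1) =
     ((A0,A1,a,\<phi>), t', compose A0 \<sigma>0 \<rho>0, compose A1 \<sigma>1 \<rho>1)"
  "invo (U_Delta_tilde \<kappa>) (A0, A1, a, \<phi>) = (A1, A0, \<phi> a, ext_inv \<phi> A0 A1)"
  "inva (U_Delta_tilde \<kappa>) ((A0, A1, a, \<phi>), (B0, B1, b, \<psi>), \<rho>0, \<rho>1) =
     ((A1, A0, \<phi> a, ext_inv \<phi> A0 A1), (B1, B0, \<psi> b, ext_inv \<psi> B0 B1), \<rho>1, \<rho>0)"
  by (simp_all add: U_Delta_tilde_def)

lemma T_is_gpd: "is_gpd (U_Delta_tilde \<kappa>)"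
proof (rule is_gpd_intro)
  fix f assume "f \<in> Ar (U_Delta_tilde \<kappa>)"
  then show "Dom (U_Delta_tilde \<kappa>) f \<in> Ob (U_Delta_tilde \<kappa>) \<and> Cod (U_Delta_tilde \<kappa>) f \<in> Ob (U_Delta_tilde \<kappa>)"
    by (cases rule: T_Ar_cases) (simp add: T_simps)
next
  fix x assume "x \<in> Ob (U_Delta_tilde \<kappa>)"
  then show "Idt (U_Delta_tilde \<kappa>) x \<in> Ar (U_Delta_tilde \<kappa>) \<and> Dom (U_Delta_tilde \<kappa>) (Idt (U_Delta_tilde \<kappa>) x) = x \<and>
      Cod (U_Delta_tilde \<kappa>) (Idt (U_Delta_tilde \<kappa>) x) = x"
    by (cases rule: T_Ob_cases) (auto simp: T_simps T_Ar_iff UDt_objs_iff EB_id EB_mem)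
next
  fix f g assume f: "f \<in> Ar (U_Delta_tilde \<kappa>)" and g: "g \<in> Ar (U_Delta_tilde \<kappa>)"
    and fg: "Cod (U_Delta_tilde \<kappa>) f = Dom (U_Delta_tilde \<kappa>) g"
  from f obtain A0 A1 a \<phi> B0 B1 b \<psi> \<rho>0 \<rho>1 where f': "f = ((A0,A1,a,\<phi>),(B0,B1,b,\<psi>),\<rho>0,\<rho>1)"
    "(A0,A1,a,\<phi>) \<in> UDt_objs \<kappa>" "(B0,B1,b,\<psi>) \<in> UDt_objs \<kappa>" "ext_bij \<rho>0 A0 B0" "ext_bij \<rho>1 A1 B1"
    "\<forall>x\<in>A0. \<psi> (\<rho>0 x) = \<rho>1 (\<phi> x)" "\<rho>0 a = b" by (rule T_Ar_cases)
  from g obtain C0 C1 c \<chi> D0 D1 d \<omega> \<sigma>0 \<sigma>1 where g': "g = ((C0,C1,c,\<chi>),(D0,D1,d,\<omega>),\<sigma>0,\<sigma>1)"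
    "(C0,C1,c,\<chi>) \<in> UDt_objs \<kappa>" "(D0,D1,d,\<omega>) \<in> UDt_objs \<kappa>" "ext_bij \<sigma>0 C0 D0" "ext_bij \<sigma>1 C1 D1"
    "\<forall>x\<in>C0. \<omega> (\<sigma>0 x) = \<sigma>1 (\<chi> x)" "\<sigma>0 c = d" by (rule T_Ar_cases)
  from fg have e: "C0 = B0" "C1 = B1" "\<chi> = \<psi>" "c = b" by (simp_all add: f' g' T_simps)
  have "\<forall>x\<in>A0. \<omega> (compose A0 \<sigma>0 \<rho>0 x) = compose A1 \<sigma>1 \<rho>1 (\<phi> x)"
  proof
    fix x assume a: "x \<in> A0"
    have "\<phi> x \<in> A1" using f'(2) a EB_mem by (auto simp add: UDt_objs_iff)
    moreover have "\<rho>0 x \<in> B0" using f'(4) a by (simp add: EB_mem)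
    ultimately show "\<omega> (compose A0 \<sigma>0 \<rho>0 x) = compose A1 \<sigma>1 \<rho>1 (\<phi> x)"
      using a f'(6) g'(6) e by (simp add: compose_def)
  qed
  moreover have "compose A0 \<sigma>0 \<rho>0 a = d" using f'(2,7) g'(7) e by (simp add: compose_def UDt_objs_iff)
  ultimately show "Comp (U_Delta_tilde \<kappa>) g f \<in> Ar (U_Delta_tilde \<kappa>) \<and> Dom (U_Delta_tilde \<kappa>) (Comp (U_Delta_tilde \<kappa>) g f) = Dom (U_Delta_tilde \<kappa>) f \<and>
       Cod (U_Delta_tilde \<kappa>) (Comp (U_Delta_tilde \<kappa>) g f) = Cod (U_Delta_tilde \<kappa>) g"
    using f' g' e by (simp add: T_simps T_Ar_iff EB_comp)
next
  fix f g h assume f: "f \<in> Ar (U_Delta_tilde \<kappa>)" and g: "g \<in> Ar (U_Delta_tilde \<kappa>)" and h: "h \<in> Ar (U_Delta_tilde \<kappa>)"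
    and fg: "Cod (U_Delta_tilde \<kappa>) f = Dom (U_Delta_tilde \<kappa>) g" and gh: "Cod (U_Delta_tilde \<kappa>) g = Dom (U_Delta_tilde \<kappa>) h"
  from f obtain A0 A1 a \<phi> B0 B1 b \<psi> \<rho>0 \<rho>1 where f': "f = ((A0,A1,a,\<phi>),(B0,B1,b,\<psi>),\<rho>0,\<rho>1)"
    "ext_bij \<rho>0 A0 B0" "ext_bij \<rho>1 A1 B1" by (rule T_Ar_cases)
  from g obtain C0 C1 c \<chi> D0 D1 d \<omega> \<sigma>0 \<sigma>1 where g': "g = ((C0,C1,c,\<chi>),(D0,D1,d,\<omega>),\<sigma>0,\<sigma>1)"
    "ext_bij \<sigma>0 C0 D0" "ext_bij \<sigma>1 C1 D1" by (rule T_Ar_cases)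
  from h obtain E0 E1 e \<eta> F0 F1 ff \<theta> \<tau>0 \<tau>1 where h': "h = ((E0,E1,e,\<eta>),(F0,F1,ff,\<theta>),\<tau>0,\<tau>1)"
    by (rule T_Ar_cases)
  from fg gh have e: "C0 = B0" "C1 = B1" by (simp_all add: f' g' h' T_simps)
  show "Comp (U_Delta_tilde \<kappa>) h (Comp (U_Delta_tilde \<kappa>) g f) = Comp (U_Delta_tilde \<kappa>) (Comp (U_Delta_tilde \<kappa>) h g) f"
    using f' g' h' e by (simp add: T_simps compose_assoc EB_funcset)
next
  fix f assume f: "f \<in> Ar (U_Delta_tilde \<kappa>)"
  from f obtain A0 A1 a \<phi> B0 B1 b \<psi> \<rho>0 \<rho>1 where f': "f = ((A0,A1,a,\<phi>),(B0,B1,b,\<psi>),\<rho>0,\<rho>1)"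
    "ext_bij \<rho>0 A0 B0" "ext_bij \<rho>1 A1 B1" by (rule T_Ar_cases)
  show "Comp (U_Delta_tilde \<kappa>) f (Idt (U_Delta_tilde \<kappa>) (Dom (U_Delta_tilde \<kappa>) f)) = f \<and>
       Comp (U_Delta_tilde \<kappa>) (Idt (U_Delta_tilde \<kappa>) (Cod (U_Delta_tilde \<kappa>) f)) f = f"
    using f' by (auto simp: T_simps EB_id_left EB_id_right)
next
  fix f assume f: "f \<in> Ar (U_Delta_tilde \<kappa>)"
  from f obtain A0 A1 a \<phi> B0 B1 b \<psi> \<rho>0 \<rho>1 where f': "f = ((A0,A1,a,\<phi>),(B0,B1,b,\<psi>),\<rho>0,\<rho>1)"
    "(A0,A1,a,\<phi>) \<in> UDt_objs \<kappa>" "(B0,B1,b,\<psi>) \<in> UDt_objs \<kappa>" "ext_bij \<rho>0 A0 B0" "ext_bij \<rho>1 A1 B1"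
    "\<forall>x\<in>A0. \<psi> (\<rho>0 x) = \<rho>1 (\<phi> x)" "\<rho>0 a = b" by (rule T_Ar_cases)
  let ?g = "((B0,B1,b,\<psi>),(A0,A1,a,\<phi>), ext_inv \<rho>0 A0 B0, ext_inv \<rho>1 A1 B1)"
  have "\<forall>y\<in>B0. \<phi> (ext_inv \<rho>0 A0 B0 y) = ext_inv \<rho>1 A1 B1 (\<psi> y)"
  proof
    fix y assume b: "y \<in> B0"
    let ?a = "ext_inv \<rho>0 A0 B0 y"
    have a: "?a \<in> A0" "\<rho>0 ?a = y" using EB_inv_mem[OF f'(4) b] EB_inv_app2[OF f'(4) b] by auto
    have "\<phi> ?a \<in> A1" using f'(2) a EB_mem by (auto simp add: UDt_objs_iff)
    then show "\<phi> ?a = ext_inv \<rho>1 A1 B1 (\<psi> y)"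
      using f'(6) a EB_inv_app1[OF f'(5)] by metis
  qed
  moreover have "ext_inv \<rho>0 A0 B0 b = a" using f'(2,7) EB_inv_app1[OF f'(4)] by (auto simp: UDt_objs_iff)
  ultimately have "?g \<in> Ar (U_Delta_tilde \<kappa>)" using f' by (simp add: T_Ar_iff EB_inv)
  moreover have "Comp (U_Delta_tilde \<kappa>) ?g f = Idt (U_Delta_tilde \<kappa>) (Dom (U_Delta_tilde \<kappa>) f)"
    "Comp (U_Delta_tilde \<kappa>) f ?g = Idt (U_Delta_tilde \<kappa>) (Cod (U_Delta_tilde \<kappa>) f)"
    using f' by (simp_all add: T_simps EB_compose_inv1 EB_compose_inv2)
  ultimately show "\<exists>g\<in>Ar (U_Delta_tilde \<kappa>). Dom (U_Delta_tilde \<kappa>) g = Cod (U_Delta_tilde \<kappa>) f \<and> Cod (U_Delta_tilde \<kappa>) g = Dom (U_Delta_tilde \<kappa>) f \<and>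
        Comp (U_Delta_tilde \<kappa>) g f = Idt (U_Delta_tilde \<kappa>) (Dom (U_Delta_tilde \<kappa>) f) \<and>
        Comp (U_Delta_tilde \<kappa>) f g = Idt (U_Delta_tilde \<kappa>) (Cod (U_Delta_tilde \<kappa>) f)"
    apply (intro bexI[of _ ?g])
    using f' by (simp_all add: T_simps)
qed

lemma T_invo_invo: "x \<in> Ob (U_Delta_tilde \<kappa>) \<Longrightarrow> invo (U_Delta_tilde \<kappa>) (invo (U_Delta_tilde \<kappa>) x) = x"
  by (erule T_Ob_cases) (simp add: T_simps EB_inv_inv EB_inv_app1)

lemma T_inva_inva: "f \<in> Ar (U_Delta_tilde \<kappa>) \<Longrightarrow> inva (U_Delta_tilde \<kappa>) (inva (U_Delta_tilde \<kappa>) f) = f"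
  by (erule T_Ar_cases) (simp add: T_simps EB_inv_inv EB_inv_app1 UDt_objs_iff)

lemma T_is_gpdG: "is_gpdG (U_Delta_tilde \<kappa>)"
proof (rule is_gpdG_intro[OF T_is_gpd _ T_invo_invo T_inva_inva])
  show "is_functor (U_Delta_tilde \<kappa>) (U_Delta_tilde \<kappa>) (inv_fnctr (U_Delta_tilde \<kappa>))"
  proof (rule is_functor_intro)
    fix x assume "x \<in> Ob (U_Delta_tilde \<kappa>)"
    then show "fo (inv_fnctr (U_Delta_tilde \<kappa>)) x \<in> Ob (U_Delta_tilde \<kappa>)"
      by (cases rule: T_Ob_cases) (simp add: T_simps UDt_objs_iff EB_inv EB_mem)
  next
    fix x assume "x \<in> Ob (U_Delta_tilde \<kappa>)"
    then show "fa (inv_fnctr (U_Delta_tilde \<kappa>)) (Idt (U_Delta_tilde \<kappa>) x) = Idt (U_Delta_tilde \<kappa>) (fo (inv_fnctr (U_Delta_tilde \<kappa>)) x)"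
      by (cases rule: T_Ob_cases) (simp add: T_simps)
  next
    fix f assume f: "f \<in> Ar (U_Delta_tilde \<kappa>)"
    from f obtain A0 A1 a \<phi> B0 B1 b \<psi> \<rho>0 \<rho>1 where f': "f = ((A0,A1,a,\<phi>),(B0,B1,b,\<psi>),\<rho>0,\<rho>1)"
      "(A0,A1,a,\<phi>) \<in> UDt_objs \<kappa>" "(B0,B1,b,\<psi>) \<in> UDt_objs \<kappa>" "ext_bij \<rho>0 A0 B0" "ext_bij \<rho>1 A1 B1"
      "\<forall>x\<in>A0. \<psi> (\<rho>0 x) = \<rho>1 (\<phi> x)" "\<rho>0 a = b" by (rule T_Ar_cases)
    have phi: "ext_bij \<phi> A0 A1" and psi: "ext_bij \<psi> B0 B1" and aA: "a \<in> A0" and bB: "b \<in> B0"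
      using f' by (simp_all add: UDt_objs_iff)
    have "\<forall>x\<in>A1. ext_inv \<psi> B0 B1 (\<rho>1 x) = \<rho>0 (ext_inv \<phi> A0 A1 x)"
    proof
      fix x assume a: "x \<in> A1"
      let ?a = "ext_inv \<phi> A0 A1 x"
      have a': "?a \<in> A0" "\<phi> ?a = x" using EB_inv_mem[OF phi a] EB_inv_app2[OF phi a] by auto
      have "\<psi> (\<rho>0 ?a) = \<rho>1 x" using f'(6) a' by metis
      moreover have "\<rho>0 ?a \<in> B0" using EB_mem[OF f'(4) a'(1)] .
      ultimately show "ext_inv \<psi> B0 B1 (\<rho>1 x) = \<rho>0 ?a" using EB_inv_app1[OF psi] by metis
    qed
    moreover have "\<rho>1 (\<phi> a) = \<psi> b" using f'(6,7) aA by metis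
    ultimately show "fa (inv_fnctr (U_Delta_tilde \<kappa>)) f \<in> Ar (U_Delta_tilde \<kappa>) \<and>
       Dom (U_Delta_tilde \<kappa>) (fa (inv_fnctr (U_Delta_tilde \<kappa>)) f) = fo (inv_fnctr (U_Delta_tilde \<kappa>)) (Dom (U_Delta_tilde \<kappa>) f) \<and>
       Cod (U_Delta_tilde \<kappa>) (fa (inv_fnctr (U_Delta_tilde \<kappa>)) f) = fo (inv_fnctr (U_Delta_tilde \<kappa>)) (Cod (U_Delta_tilde \<kappa>) f)"
      using f' phi psi aA bB by (simp add: T_simps T_Ar_iff UDt_objs_iff EB_inv EB_mem)
  next
    fix f g assume f: "f \<in> Ar (U_Delta_tilde \<kappa>)" and g: "g \<in> Ar (U_Delta_tilde \<kappa>)"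
      and fg: "Cod (U_Delta_tilde \<kappa>) f = Dom (U_Delta_tilde \<kappa>) g"
    from f obtain A0 A1 a \<phi> B0 B1 b \<psi> \<rho>0 \<rho>1 where f': "f = ((A0,A1,a,\<phi>),(B0,B1,b,\<psi>),\<rho>0,\<rho>1)"
      by (rule T_Ar_cases)
    from g obtain C0 C1 c \<chi> D0 D1 d \<omega> \<sigma>0 \<sigma>1 where g': "g = ((C0,C1,c,\<chi>),(D0,D1,d,\<omega>),\<sigma>0,\<sigma>1)"
      by (rule T_Ar_cases)
    from fg have e: "C0 = B0" "C1 = B1" "\<chi> = \<psi>" "c = b" by (simp_all add: f' g' T_simps)
    show "fa (inv_fnctr (U_Delta_tilde \<kappa>)) (Comp (U_Delta_tilde \<kappa>) g f) =
       Comp (U_Delta_tilde \<kappa>) (fa (inv_fnctr (U_Delta_tilde \<kappa>)) g) (fa (inv_fnctr (U_Delta_tilde \<kappa>)) f)"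
      using f' g' e by (simp add: T_simps)
  qed
qed



lemma gpd_dom: "is_gpd C \<Longrightarrow> f \<in> Ar C \<Longrightarrow> Dom C f \<in> Ob C"
  and gpd_cod: "is_gpd C \<Longrightarrow> f \<in> Ar C \<Longrightarrow> Cod C f \<in> Ob C"
  and gpd_idt: "is_gpd C \<Longrightarrow> x \<in> Ob C \<Longrightarrow> Idt C x \<in> Ar C"
  and gpd_idt_dom: "is_gpd C \<Longrightarrow> x \<in> Ob C \<Longrightarrow> Dom C (Idt C x) = x"
  and gpd_idt_cod: "is_gpd C \<Longrightarrow> x \<in> Ob C \<Longrightarrow> Cod C (Idt C x) = x"
  and gpd_comp: "is_gpd C \<Longrightarrow> f \<in> Ar C \<Longrightarrow> g \<in> Ar C \<Longrightarrow> Cod C f = Dom C g \<Longrightarrow> Comp C g f \<in> Ar C"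
  and gpd_comp_dom: "is_gpd C \<Longrightarrow> f \<in> Ar C \<Longrightarrow> g \<in> Ar C \<Longrightarrow> Cod C f = Dom C g \<Longrightarrow> Dom C (Comp C g f) = Dom C f"
  and gpd_comp_cod: "is_gpd C \<Longrightarrow> f \<in> Ar C \<Longrightarrow> g \<in> Ar C \<Longrightarrow> Cod C f = Dom C g \<Longrightarrow> Cod C (Comp C g f) = Cod C g"
  and gpd_assoc: "is_gpd C \<Longrightarrow> f \<in> Ar C \<Longrightarrow> g \<in> Ar C \<Longrightarrow> h \<in> Ar C \<Longrightarrow> Cod C f = Dom C g \<Longrightarrow> Cod C g = Dom C h \<Longrightarrow>
        Comp C h (Comp C g f) = Comp C (Comp C h g) f"
  and gpd_unit_r: "is_gpd C \<Longrightarrow> f \<in> Ar C \<Longrightarrow> Comp C f (Idt C (Dom C f)) = f"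
  and gpd_unit_l: "is_gpd C \<Longrightarrow> f \<in> Ar C \<Longrightarrow> Comp C (Idt C (Cod C f)) f = f"
  unfolding is_gpd_def by blast+

lemma gpd_inv_ex: "is_gpd C \<Longrightarrow> f \<in> Ar C \<Longrightarrow> \<exists>g\<in>Ar C. Dom C g = Cod C f \<and> Cod C g = Dom C f \<and>
        Comp C g f = Idt C (Dom C f) \<and> Comp C f g = Idt C (Cod C f)"
  unfolding is_gpd_def by blast

lemma gpd_inv_unique:
  assumes C: "is_gpd C" and f: "f \<in> Ar C" and g1: "g1 \<in> Ar C" "Dom C g1 = Cod C f" "Comp C g1 f = Idt C (Dom C f)"
    and g2: "g2 \<in> Ar C" "Cod C g2 = Dom C f" "Comp C f g2 = Idt C (Cod C f)"
  shows "g1 = g2"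
proof -
  have "g1 = Comp C g1 (Idt C (Dom C g1))" using gpd_unit_r[OF C g1(1)] by simp
  also have "\<dots> = Comp C g1 (Comp C f g2)" using g1(2) g2(3) by simp
  also have "\<dots> = Comp C (Comp C g1 f) g2" using gpd_assoc[OF C g2(1) f g1(1)] g2(2) g1(2) by simp
  also have "\<dots> = Comp C (Idt C (Cod C g2)) g2" using g1(3) g2(2) by simp
  also have "\<dots> = g2" using gpd_unit_l[OF C g2(1)] .
  finally show ?thesis .
qed

lemma fun_ob: "is_functor C D F \<Longrightarrow> x \<in> Ob C \<Longrightarrow> fo F x \<in> Ob D"
  and fun_ar: "is_functor C D F \<Longrightarrow> f \<in> Ar C \<Longrightarrow> fa F f \<in> Ar D"
  and fun_dom: "is_functor C D F \<Longrightarrow> f \<in> Ar C \<Longrightarrow> Dom D (fa F f) = fo F (Dom C f)"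
  and fun_cod: "is_functor C D F \<Longrightarrow> f \<in> Ar C \<Longrightarrow> Cod D (fa F f) = fo F (Cod C f)"
  and fun_idt: "is_functor C D F \<Longrightarrow> x \<in> Ob C \<Longrightarrow> fa F (Idt C x) = Idt D (fo F x)"
  and fun_comp: "is_functor C D F \<Longrightarrow> f \<in> Ar C \<Longrightarrow> g \<in> Ar C \<Longrightarrow> Cod C f = Dom C g \<Longrightarrow> fa F (Comp C g f) = Comp D (fa F g) (fa F f)"
  unfolding is_functor_def by blast+

lemma gG_gpd: "is_gpdG C \<Longrightarrow> is_gpd C"
  and gG_fun: "is_gpdG C \<Longrightarrow> is_functor C C (inv_fnctr C)"
  and gG_invo_invo: "is_gpdG C \<Longrightarrow> x \<in> Ob C \<Longrightarrow> invo C (invo C x) = x"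
  and gG_inva_inva: "is_gpdG C \<Longrightarrow> f \<in> Ar C \<Longrightarrow> inva C (inva C f) = f"
  unfolding is_gpdG_def by blast+

lemma gG_invo_ob: "is_gpdG C \<Longrightarrow> x \<in> Ob C \<Longrightarrow> invo C x \<in> Ob C"
  and gG_inva_ar: "is_gpdG C \<Longrightarrow> f \<in> Ar C \<Longrightarrow> inva C f \<in> Ar C"
  and gG_inva_dom: "is_gpdG C \<Longrightarrow> f \<in> Ar C \<Longrightarrow> Dom C (inva C f) = invo C (Dom C f)"
  and gG_inva_cod: "is_gpdG C \<Longrightarrow> f \<in> Ar C \<Longrightarrow> Cod C (inva C f) = invo C (Cod C f)"
  and gG_inva_idt: "is_gpdG C \<Longrightarrow> x \<in> Ob C \<Longrightarrow> inva C (Idt C x) = Idt C (invo C x)"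
  and gG_inva_comp: "is_gpdG C \<Longrightarrow> f \<in> Ar C \<Longrightarrow> g \<in> Ar C \<Longrightarrow> Cod C f = Dom C g \<Longrightarrow> inva C (Comp C g f) = Comp C (inva C g) (inva C f)"
  using fun_ob[OF gG_fun] fun_ar[OF gG_fun] fun_dom[OF gG_fun] fun_cod[OF gG_fun] fun_idt[OF gG_fun] fun_comp[OF gG_fun]
  by simp_all

lemma mG_dom_gG: "is_morG C D F \<Longrightarrow> is_gpdG C"
  and mG_cod_gG: "is_morG C D F \<Longrightarrow> is_gpdG D"
  and mG_fun: "is_morG C D F \<Longrightarrow> is_functor C D F"
  and mG_invo: "is_morG C D F \<Longrightarrow> x \<in> Ob C \<Longrightarrow> fo F (invo C x) = invo D (fo F x)"
  and mG_inva: "is_morG C D F \<Longrightarrow> f \<in> Ar C \<Longrightarrow> fa F (inva C f) = inva D (fa F f)"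
  unfolding is_morG_def by blast+

lemma is_morG_intro:
  assumes "is_gpdG C" "is_gpdG D" "is_functor C D F"
    "\<And>x. x \<in> Ob C \<Longrightarrow> fo F (invo C x) = invo D (fo F x)"
    "\<And>f. f \<in> Ar C \<Longrightarrow> fa F (inva C f) = inva D (fa F f)"
  shows "is_morG C D F"
  unfolding is_morG_def using assms by blast

lemma p_simps:
  "fo p_Delta (A0, A1, a, \<phi>) = (A0, A1, \<phi>)"
  "fa p_Delta ((A0, A1, a, \<phi>), (B0, B1, b, \<psi>), \<rho>0, \<rho>1) = ((A0, A1, \<phi>), (B0, B1, \<psi>), \<rho>0, \<rho>1)"
  by (simp_all add: p_Delta_def)

lemma p_morG: "is_morG (U_Delta_tilde \<kappa>) (U_Delta \<kappa>) p_Delta"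
proof (rule is_morG_intro[OF T_is_gpdG U_is_gpdG])
  show "is_functor (U_Delta_tilde \<kappa>) (U_Delta \<kappa>) p_Delta"
  proof (rule is_functor_intro)
    fix x assume "x \<in> Ob (U_Delta_tilde \<kappa>)"
    then show "fo p_Delta x \<in> Ob (U_Delta \<kappa>)"
      by (cases rule: T_Ob_cases) (simp add: p_simps U_simps UD_objs_iff)
  next
    fix x assume "x \<in> Ob (U_Delta_tilde \<kappa>)"
    then show "fa p_Delta (Idt (U_Delta_tilde \<kappa>) x) = Idt (U_Delta \<kappa>) (fo p_Delta x)"
      by (cases rule: T_Ob_cases) (simp add: p_simps U_simps T_simps)
  next
    fix f assume "f \<in> Ar (U_Delta_tilde \<kappa>)"
    then show "fa p_Delta f \<in> Ar (U_Delta \<kappa>) \<and> Dom (U_Delta \<kappa>) (fa p_Delta f) = fo p_Delta (Dom (U_Delta_tilde \<kappa>) f) \<and>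
          Cod (U_Delta \<kappa>) (fa p_Delta f) = fo p_Delta (Cod (U_Delta_tilde \<kappa>) f)"
      by (cases rule: T_Ar_cases) (simp add: p_simps U_simps T_simps U_Ar_iff UD_objs_iff UDt_objs_iff)
  next
    fix f g assume f: "f \<in> Ar (U_Delta_tilde \<kappa>)" and g: "g \<in> Ar (U_Delta_tilde \<kappa>)"
    from f obtain A0 A1 a \<phi> B0 B1 b \<psi> \<rho>0 \<rho>1 where f': "f = ((A0,A1,a,\<phi>),(B0,B1,b,\<psi>),\<rho>0,\<rho>1)"
      by (rule T_Ar_cases)
    from g obtain C0 C1 c \<chi> D0 D1 d \<omega> \<sigma>0 \<sigma>1 where g': "g = ((C0,C1,c,\<chi>),(D0,D1,d,\<omega>),\<sigma>0,\<sigma>1)"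
      by (rule T_Ar_cases)
    show "fa p_Delta (Comp (U_Delta_tilde \<kappa>) g f) = Comp (U_Delta \<kappa>) (fa p_Delta g) (fa p_Delta f)"
      using f' g' by (simp add: p_simps U_simps T_simps)
  qed
next
  fix x assume "x \<in> Ob (U_Delta_tilde \<kappa>)"
  then show "fo p_Delta (invo (U_Delta_tilde \<kappa>) x) = invo (U_Delta \<kappa>) (fo p_Delta x)"
    by (cases rule: T_Ob_cases) (simp add: p_simps U_simps T_simps)
next
  fix f assume "f \<in> Ar (U_Delta_tilde \<kappa>)"
  then show "fa p_Delta (inva (U_Delta_tilde \<kappa>) f) = inva (U_Delta \<kappa>) (fa p_Delta f)"
    by (cases rule: T_Ar_cases) (simp add: p_simps U_simps T_simps)
qed

lemma p_lift_ex:
  assumes y: "y \<in> Ob (U_Delta_tilde \<kappa>)" and g: "g \<in> Ar (U_Delta \<kappa>)" and d: "Dom (U_Delta \<kappa>) g = fo p_Delta y"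
  shows "\<exists>v\<in>Ar (U_Delta_tilde \<kappa>). Dom (U_Delta_tilde \<kappa>) v = y \<and> fa p_Delta v = g"
proof -
  from y obtain A0 A1 a \<phi> where y': "y = (A0,A1,a,\<phi>)" "|A0| <o \<kappa>" "|A1| <o \<kappa>" "ext_bij \<phi> A0 A1" "a \<in> A0"
    by (rule T_Ob_cases)
  from g obtain C0 C1 \<chi> B0 B1 \<psi> \<rho>0 \<rho>1 where g': "g = ((C0,C1,\<chi>),(B0,B1,\<psi>),\<rho>0,\<rho>1)"
    "(C0,C1,\<chi>) \<in> UD_objs \<kappa>" "(B0,B1,\<psi>) \<in> UD_objs \<kappa>" "ext_bij \<rho>0 C0 B0" "ext_bij \<rho>1 C1 B1"
    "\<forall>a\<in>C0. \<psi> (\<rho>0 a) = \<rho>1 (\<chi> a)" by (rule U_Ar_cases)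
  from d have e: "C0 = A0" "C1 = A1" "\<chi> = \<phi>" by (simp_all add: g' y' U_simps p_simps)
  let ?v = "((A0,A1,a,\<phi>),(B0,B1,\<rho>0 a,\<psi>),\<rho>0,\<rho>1)"
  have "?v \<in> Ar (U_Delta_tilde \<kappa>)" using y' g' e by (simp add: T_Ar_iff UDt_objs_iff UD_objs_iff EB_mem)
  then show ?thesis using y' g' e by (intro bexI[of _ ?v]) (simp_all add: T_simps p_simps)
qed

lemma p_lift_uniq:
  assumes "v1 \<in> Ar (U_Delta_tilde \<kappa>)" "v2 \<in> Ar (U_Delta_tilde \<kappa>)"
    "Dom (U_Delta_tilde \<kappa>) v1 = Dom (U_Delta_tilde \<kappa>) v2" "fa p_Delta v1 = fa p_Delta v2"
  shows "v1 = v2"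
proof -
  from assms(1) obtain A0 A1 a \<phi> B0 B1 b \<psi> \<rho>0 \<rho>1 where f': "v1 = ((A0,A1,a,\<phi>),(B0,B1,b,\<psi>),\<rho>0,\<rho>1)"
    "\<rho>0 a = b" by (rule T_Ar_cases)
  from assms(2) obtain C0 C1 c \<chi> D0 D1 d \<omega> \<sigma>0 \<sigma>1 where g': "v2 = ((C0,C1,c,\<chi>),(D0,D1,d,\<omega>),\<sigma>0,\<sigma>1)"
    "\<sigma>0 c = d" by (rule T_Ar_cases)
  show ?thesis using assms(3,4) f' g' by (simp add: T_simps p_simps)
qed

section \<open>Pullback object\<close>

lemma pb_simps:
  "(b, y) \<in> Ob (pb_obj B Y G P) \<longleftrightarrow> b \<in> Ob B \<and> y \<in> Ob Y \<and> fo G b = fo P y"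
  "(u, v) \<in> Ar (pb_obj B Y G P) \<longleftrightarrow> u \<in> Ar B \<and> v \<in> Ar Y \<and> fa G u = fa P v"
  "Dom (pb_obj B Y G P) (u, v) = (Dom B u, Dom Y v)"
  "Cod (pb_obj B Y G P) (u, v) = (Cod B u, Cod Y v)"
  "Idt (pb_obj B Y G P) (b, y) = (Idt B b, Idt Y y)"
  "Comp (pb_obj B Y G P) (u', v') (u, v) = (Comp B u' u, Comp Y v' v)"
  "invo (pb_obj B Y G P) (b, y) = (invo B b, invo Y y)"
  "inva (pb_obj B Y G P) (u, v) = (inva B u, inva Y v)"
  by (simp_all add: pb_obj_def)

lemma pb_is_gpdG:
  assumes G: "is_morG B Z G" and P: "is_morG Y Z P"
  shows "is_gpdG (pb_obj B Y G P)"
proof -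
  have B: "is_gpdG B" and Y: "is_gpdG Y" and Z: "is_gpdG Z" using G P by (simp_all add: is_morG_def)
  have Bg: "is_gpd B" and Yg: "is_gpd Y" and Zg: "is_gpd Z" using B Y Z by (simp_all add: is_gpdG_def)
  have Gf: "is_functor B Z G" and Pf: "is_functor Y Z P" using G P by (simp_all add: is_morG_def)
  note bs = gpd_dom[OF Bg] gpd_cod[OF Bg] gpd_idt[OF Bg] gpd_idt_dom[OF Bg] gpd_idt_cod[OF Bg] gpd_comp[OF Bg]
    gpd_comp_dom[OF Bg] gpd_comp_cod[OF Bg] gpd_assoc[OF Bg] gpd_unit_l[OF Bg] gpd_unit_r[OF Bg]
  note ys = gpd_dom[OF Yg] gpd_cod[OF Yg] gpd_idt[OF Yg] gpd_idt_dom[OF Yg] gpd_idt_cod[OF Yg] gpd_comp[OF Yg]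
    gpd_comp_dom[OF Yg] gpd_comp_cod[OF Yg] gpd_assoc[OF Yg] gpd_unit_l[OF Yg] gpd_unit_r[OF Yg]
  note gs = fun_ob[OF Gf] fun_ar[OF Gf] fun_dom[OF Gf] fun_cod[OF Gf] fun_idt[OF Gf] fun_comp[OF Gf]
  note ps = fun_ob[OF Pf] fun_ar[OF Pf] fun_dom[OF Pf] fun_cod[OF Pf] fun_idt[OF Pf] fun_comp[OF Pf]
  have gpd: "is_gpd (pb_obj B Y G P)"
  proof (rule is_gpd_intro)
    fix f assume "f \<in> Ar (pb_obj B Y G P)"
    then obtain u v where f: "f = (u, v)" "u \<in> Ar B" "v \<in> Ar Y" "fa G u = fa P v"
      by (cases f) (auto simp: pb_simps)
    then show "Dom (pb_obj B Y G P) f \<in> Ob (pb_obj B Y G P) \<and> Cod (pb_obj B Y G P) f \<in> Ob (pb_obj B Y G P)"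
      by (metis bs(1,2) ys(1,2) gs(3,4) ps(3,4) pb_simps(1,3,4))
  next
    fix x assume "x \<in> Ob (pb_obj B Y G P)"
    then obtain b y where x: "x = (b, y)" "b \<in> Ob B" "y \<in> Ob Y" "fo G b = fo P y"
      by (cases x) (auto simp: pb_simps)
    then show "Idt (pb_obj B Y G P) x \<in> Ar (pb_obj B Y G P) \<and> Dom (pb_obj B Y G P) (Idt (pb_obj B Y G P) x) = x \<and>
      Cod (pb_obj B Y G P) (Idt (pb_obj B Y G P) x) = x"
      by (simp add: pb_simps bs ys gs ps)
  next
    fix f g assume "f \<in> Ar (pb_obj B Y G P)" "g \<in> Ar (pb_obj B Y G P)" and fg: "Cod (pb_obj B Y G P) f = Dom (pb_obj B Y G P) g"
    then obtain u v u' v' where f: "f = (u, v)" "u \<in> Ar B" "v \<in> Ar Y" "fa G u = fa P v"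
      and g: "g = (u', v')" "u' \<in> Ar B" "v' \<in> Ar Y" "fa G u' = fa P v'"
      by (cases f, cases g) (auto simp: pb_simps)
    from fg have c: "Cod B u = Dom B u'" "Cod Y v = Dom Y v'" by (simp_all add: f g pb_simps)
    show "Comp (pb_obj B Y G P) g f \<in> Ar (pb_obj B Y G P) \<and> Dom (pb_obj B Y G P) (Comp (pb_obj B Y G P) g f) = Dom (pb_obj B Y G P) f \<and>
       Cod (pb_obj B Y G P) (Comp (pb_obj B Y G P) g f) = Cod (pb_obj B Y G P) g"
      using f g c by (simp add: pb_simps bs ys gs ps)
  next
    fix f g h assume "f \<in> Ar (pb_obj B Y G P)" "g \<in> Ar (pb_obj B Y G P)" "h \<in> Ar (pb_obj B Y G P)"
      and fg: "Cod (pb_obj B Y G P) f = Dom (pb_obj B Y G P) g" and gh: "Cod (pb_obj B Y G P) g = Dom (pb_obj B Y G P) h"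
    then obtain u v u' v' u'' v'' where f: "f = (u, v)" "u \<in> Ar B" "v \<in> Ar Y"
      and g: "g = (u', v')" "u' \<in> Ar B" "v' \<in> Ar Y"
      and h: "h = (u'', v'')" "u'' \<in> Ar B" "v'' \<in> Ar Y"
      by (cases f, cases g, cases h) (auto simp: pb_simps)
    from fg gh have c: "Cod B u = Dom B u'" "Cod Y v = Dom Y v'" "Cod B u' = Dom B u''" "Cod Y v' = Dom Y v''"
      by (simp_all add: f g h pb_simps)
    show "Comp (pb_obj B Y G P) h (Comp (pb_obj B Y G P) g f) = Comp (pb_obj B Y G P) (Comp (pb_obj B Y G P) h g) f"
      using f g h c by (simp add: pb_simps bs ys)
  next
    fix f assume "f \<in> Ar (pb_obj B Y G P)"
    then obtain u v where f: "f = (u, v)" "u \<in> Ar B" "v \<in> Ar Y"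
      by (cases f) (auto simp: pb_simps)
    then show "Comp (pb_obj B Y G P) f (Idt (pb_obj B Y G P) (Dom (pb_obj B Y G P) f)) = f \<and>
       Comp (pb_obj B Y G P) (Idt (pb_obj B Y G P) (Cod (pb_obj B Y G P) f)) f = f"
      by (simp add: pb_simps bs ys)
  next
    fix f assume "f \<in> Ar (pb_obj B Y G P)"
    then obtain u v where f: "f = (u, v)" "u \<in> Ar B" "v \<in> Ar Y" "fa G u = fa P v"
      by (cases f) (auto simp: pb_simps)
    obtain u' where u': "u' \<in> Ar B" "Dom B u' = Cod B u" "Cod B u' = Dom B u"
       "Comp B u' u = Idt B (Dom B u)" "Comp B u u' = Idt B (Cod B u)"
      using gpd_inv_ex[OF Bg f(2)] by blast
    obtain v' where v': "v' \<in> Ar Y" "Dom Y v' = Cod Y v" "Cod Y v' = Dom Y v"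
       "Comp Y v' v = Idt Y (Dom Y v)" "Comp Y v v' = Idt Y (Cod Y v)"
      using gpd_inv_ex[OF Yg f(3)] by blast
    have "fa G u' = fa P v'"
    proof (rule gpd_inv_unique[OF Zg gs(2)[OF f(2)]])
      show "fa G u' \<in> Ar Z" using gs(2)[OF u'(1)] .
      show "Dom Z (fa G u') = Cod Z (fa G u)" using u' f by (metis gs(3,4))
      have "Comp Z (fa G u') (fa G u) = fa G (Comp B u' u)" using gs(6)[OF f(2) u'(1)] u'(2) by simp
      also have "\<dots> = Idt Z (fo G (Dom B u))" using u'(4) gs(5) bs(1) f(2) by simp
      also have "\<dots> = Idt Z (Dom Z (fa G u))" using gs(3) f(2) by simp
      finally show "Comp Z (fa G u') (fa G u) = Idt Z (Dom Z (fa G u))" .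
      show "fa P v' \<in> Ar Z" using ps(2)[OF v'(1)] .
      show "Cod Z (fa P v') = Dom Z (fa G u)" using v' f by (metis ps(3,4))
      have "Comp Z (fa G u) (fa P v') = fa P (Comp Y v v')" using ps(6)[OF v'(1) f(3)] v'(3) f(4) by simp
      also have "\<dots> = Idt Z (fo P (Cod Y v))" using v'(5) ps(5) ys(2) f(3) by simp
      also have "\<dots> = Idt Z (Cod Z (fa G u))" using ps(4) f(3,4) by simp
      finally show "Comp Z (fa G u) (fa P v') = Idt Z (Cod Z (fa G u))" .
    qed
    then have "(u', v') \<in> Ar (pb_obj B Y G P)" using u' v' by (simp add: pb_simps)
    then show "\<exists>g\<in>Ar (pb_obj B Y G P). Dom (pb_obj B Y G P) g = Cod (pb_obj B Y G P) f \<and> Cod (pb_obj B Y G P) g = Dom (pb_obj B Y G P) f \<and>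
        Comp (pb_obj B Y G P) g f = Idt (pb_obj B Y G P) (Dom (pb_obj B Y G P) f) \<and>
        Comp (pb_obj B Y G P) f g = Idt (pb_obj B Y G P) (Cod (pb_obj B Y G P) f)"
      using u' v' f by (intro bexI[of _ "(u', v')"]) (simp_all add: pb_simps)
  qed
  show ?thesis
  proof (rule is_gpdG_intro[OF gpd])
    show "is_functor (pb_obj B Y G P) (pb_obj B Y G P) (inv_fnctr (pb_obj B Y G P))"
    proof (rule is_functor_intro)
      fix x assume "x \<in> Ob (pb_obj B Y G P)"
      then obtain b y where x: "x = (b, y)" "b \<in> Ob B" "y \<in> Ob Y" "fo G b = fo P y"
        by (cases x) (auto simp: pb_simps)
      then show "fo (inv_fnctr (pb_obj B Y G P)) x \<in> Ob (pb_obj B Y G P)"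
        using G P B Y by (simp add: pb_simps gG_invo_ob mG_invo)
    next
      fix x assume "x \<in> Ob (pb_obj B Y G P)"
      then obtain b y where x: "x = (b, y)" "b \<in> Ob B" "y \<in> Ob Y" "fo G b = fo P y"
        by (cases x) (auto simp: pb_simps)
      then show "fa (inv_fnctr (pb_obj B Y G P)) (Idt (pb_obj B Y G P) x) = Idt (pb_obj B Y G P) (fo (inv_fnctr (pb_obj B Y G P)) x)"
        using B Y by (simp add: pb_simps gG_inva_idt)
    next
      fix f assume "f \<in> Ar (pb_obj B Y G P)"
      then obtain u v where f: "f = (u, v)" "u \<in> Ar B" "v \<in> Ar Y" "fa G u = fa P v"
        by (cases f) (auto simp: pb_simps)
      then show "fa (inv_fnctr (pb_obj B Y G P)) f \<in> Ar (pb_obj B Y G P) \<and>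
         Dom (pb_obj B Y G P) (fa (inv_fnctr (pb_obj B Y G P)) f) = fo (inv_fnctr (pb_obj B Y G P)) (Dom (pb_obj B Y G P) f) \<and>
         Cod (pb_obj B Y G P) (fa (inv_fnctr (pb_obj B Y G P)) f) = fo (inv_fnctr (pb_obj B Y G P)) (Cod (pb_obj B Y G P) f)"
        using G P B Y by (simp add: pb_simps gG_inva_ar gG_inva_dom gG_inva_cod mG_inva)
    next
      fix f g assume "f \<in> Ar (pb_obj B Y G P)" "g \<in> Ar (pb_obj B Y G P)" and fg: "Cod (pb_obj B Y G P) f = Dom (pb_obj B Y G P) g"
      then obtain u v u' v' where f: "f = (u, v)" "u \<in> Ar B" "v \<in> Ar Y"
        and g: "g = (u', v')" "u' \<in> Ar B" "v' \<in> Ar Y"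
        by (cases f, cases g) (auto simp: pb_simps)
      from fg have c: "Cod B u = Dom B u'" "Cod Y v = Dom Y v'" by (simp_all add: f g pb_simps)
      show "fa (inv_fnctr (pb_obj B Y G P)) (Comp (pb_obj B Y G P) g f) =
         Comp (pb_obj B Y G P) (fa (inv_fnctr (pb_obj B Y G P)) g) (fa (inv_fnctr (pb_obj B Y G P)) f)"
        using f g c B Y by (simp add: pb_simps gG_inva_comp)
    qed
  next
    fix x assume "x \<in> Ob (pb_obj B Y G P)"
    then show "invo (pb_obj B Y G P) (invo (pb_obj B Y G P) x) = x"
      using B Y by (cases x) (simp add: pb_simps gG_invo_invo)
  next
    fix f assume "f \<in> Ar (pb_obj B Y G P)"
    then show "inva (pb_obj B Y G P) (inva (pb_obj B Y G P) f) = f"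
      using B Y by (cases f) (simp add: pb_simps gG_inva_inva)
  qed
qed

lemma pair_morG:
  assumes F: "is_morG E B F" and H: "is_morG E Y H" and G: "is_morG B Z G" and P: "is_morG Y Z P"
    and co: "\<forall>x\<in>Ob E. fo P (fo H x) = fo G (fo F x)" and ca: "\<forall>f\<in>Ar E. fa P (fa H f) = fa G (fa F f)"
  shows "is_morG E (pb_obj B Y G P) \<lparr>fo = (\<lambda>x. (fo F x, fo H x)), fa = (\<lambda>f. (fa F f, fa H f))\<rparr>"
proof (rule is_morG_intro)
  show "is_gpdG E" using F by (rule mG_dom_gG)
  show "is_gpdG (pb_obj B Y G P)" using G P by (rule pb_is_gpdG)
  have Ff: "is_functor E B F" and Hf: "is_functor E Y H" using F H by (simp_all add: mG_fun)
  show "is_functor E (pb_obj B Y G P) \<lparr>fo = (\<lambda>x. (fo F x, fo H x)), fa = (\<lambda>f. (fa F f, fa H f))\<rparr>"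
    by (rule is_functor_intro)
      (use co ca in \<open>auto simp: pb_simps fun_ob[OF Ff] fun_ob[OF Hf] fun_ar[OF Ff] fun_ar[OF Hf]
        fun_dom[OF Ff] fun_dom[OF Hf] fun_cod[OF Ff] fun_cod[OF Hf] fun_idt[OF Ff] fun_idt[OF Hf]
        fun_comp[OF Ff] fun_comp[OF Hf]\<close>)
  show "\<And>x. x \<in> Ob E \<Longrightarrow> fo \<lparr>fo = (\<lambda>x. (fo F x, fo H x)), fa = (\<lambda>f. (fa F f, fa H f))\<rparr> (invo E x) =
      invo (pb_obj B Y G P) (fo \<lparr>fo = (\<lambda>x. (fo F x, fo H x)), fa = (\<lambda>f. (fa F f, fa H f))\<rparr> x)"
    using F H by (simp add: pb_simps mG_invo)
  show "\<And>f. f \<in> Ar E \<Longrightarrow> fa \<lparr>fo = (\<lambda>x. (fo F x, fo H x)), fa = (\<lambda>f. (fa F f, fa H f))\<rparr> (inva E f) =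
      inva (pb_obj B Y G P) (fa \<lparr>fo = (\<lambda>x. (fo F x, fo H x)), fa = (\<lambda>f. (fa F f, fa H f))\<rparr> f)"
    using F H by (simp add: pb_simps mG_inva)
qed



lemma forward:
  fixes \<kappa> :: "'u rel"
    and E :: "('eo, 'ea) gpdG" and B :: "('bo, 'ba) gpdG"
    and F :: "('eo, 'ea, 'bo, 'ba) fnctr"
  assumes pb: "is_pullback_of E B F (U_Delta_tilde \<kappa>) (U_Delta \<kappa>) p_Delta"
  shows "discrete_fibration E B F \<and> (\<forall>b\<in>Ob B. |fiber_obj E F b| <o \<kappa>)"
proof -
  let ?T = "U_Delta_tilde \<kappa>" and ?U = "U_Delta \<kappa>"
  obtain G H where sq: "is_pullback_square E B ?T ?U F H p_Delta G"
    using pb unfolding is_pullback_of_def by blast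
  let ?C = "\<lparr>fo = (\<lambda>x. (fo F x, fo H x)), fa = (\<lambda>f. (fa F f, fa H f))\<rparr>"
  let ?Q = "pb_obj B ?T G p_Delta"
  have Fm: "is_morG E B F" and Hm: "is_morG E ?T H" and Gm: "is_morG B ?U G"
    and co: "\<forall>x\<in>Ob E. fo p_Delta (fo H x) = fo G (fo F x)"
    and ca: "\<forall>f\<in>Ar E. fa p_Delta (fa H f) = fa G (fa F f)"
    and iso: "is_isoG E ?Q ?C"
    using sq unfolding is_pullback_square_def by blast+
  obtain K where Km: "is_morG ?Q E K" and KC1: "\<forall>x\<in>Ob E. fo K (fo ?C x) = x"
    and KC2: "\<forall>f\<in>Ar E. fa K (fa ?C f) = f"
    and CK1: "\<forall>y\<in>Ob ?Q. fo ?C (fo K y) = y" and CK2: "\<forall>g\<in>Ar ?Q. fa ?C (fa K g) = g"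
    using iso unfolding is_isoG_def by blast
  have Ff: "is_functor E B F" and Hf: "is_functor E ?T H" and Gf: "is_functor B ?U G"
    and Kf: "is_functor ?Q E K" using Fm Hm Gm Km by (simp_all add: mG_fun)
  have df: "discrete_fibration E B F"
    unfolding discrete_fibration_def
  proof (intro conjI ballI impI)
    show "is_functor E B F" by fact
    fix x h assume x: "x \<in> Ob E" and h: "h \<in> Ar B" and d: "Dom B h = fo F x"
    have Hx: "fo H x \<in> Ob ?T" using fun_ob[OF Hf x] .
    have "Dom ?U (fa G h) = fo p_Delta (fo H x)" using fun_dom[OF Gf h] d co x by simp
    then obtain v where v: "v \<in> Ar ?T" "Dom ?T v = fo H x" "fa p_Delta v = fa G h"
      using p_lift_ex[OF Hx fun_ar[OF Gf h]] by blast
    have hv: "(h, v) \<in> Ar ?Q" using h v by (simp add: pb_simps)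
    let ?k = "fa K (h, v)"
    have k: "?k \<in> Ar E" using fun_ar[OF Kf hv] .
    have "Dom E ?k = fo K (Dom ?Q (h, v))" using fun_dom[OF Kf hv] .
    also have "\<dots> = fo K (fo ?C x)" using d v by (simp add: pb_simps)
    also have "\<dots> = x" using KC1 x by blast
    finally have dk: "Dom E ?k = x" .
    have "fa ?C ?k = (h, v)" using CK2 hv by blast
    then have fk: "fa F ?k = h" by simp
    show "\<exists>!h'. h' \<in> Ar E \<and> Dom E h' = x \<and> fa F h' = h"
    proof (rule ex1I[of _ ?k])
      show "?k \<in> Ar E \<and> Dom E ?k = x \<and> fa F ?k = h" using k dk fk by blast
      fix k' assume k': "k' \<in> Ar E \<and> Dom E k' = x \<and> fa F k' = h"
      have "fa H k' = fa H ?k"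
      proof (rule p_lift_uniq)
        show "fa H k' \<in> Ar ?T" "fa H ?k \<in> Ar ?T" using fun_ar[OF Hf] k k' by blast+
        show "Dom ?T (fa H k') = Dom ?T (fa H ?k)" using fun_dom[OF Hf, of k'] fun_dom[OF Hf, of ?k] k k' dk by simp
        have "fa p_Delta (fa H k') = fa G (fa F k')" using ca k' by blast
        moreover have "fa p_Delta (fa H ?k) = fa G (fa F ?k)" using ca k by blast
        ultimately show "fa p_Delta (fa H k') = fa p_Delta (fa H ?k)" using k' fk by simp
      qed
      then have "fa ?C k' = fa ?C ?k" using k' fk by simp
      note eq = this
      have e1: "fa K (fa ?C k') = k'" using KC2 k' by blast
      have e2: "fa K (fa ?C ?k) = ?k" using KC2 k by blast
      have "k' = fa K (fa ?C k')" using e1 by (rule sym)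
      also have "\<dots> = fa K (fa ?C ?k)" using eq by (rule arg_cong)
      also have "\<dots> = ?k" using e2 .
      finally show "k' = ?k" .
    qed
  qed
  have fib: "\<forall>b\<in>Ob B. |fiber_obj E F b| <o \<kappa>"
  proof
    fix b assume b: "b \<in> Ob B"
    have "fo G b \<in> Ob ?U" using fun_ob[OF Gf b] .
    then obtain A0 A1 \<phi> where Gb: "fo G b = (A0, A1, \<phi>)" "|A0| <o \<kappa>"
      by (rule U_Ob_cases) blast
    define pt where "pt x = fst (snd (snd (fo H x)))" for x
    have Hx: "fo H x = (A0, A1, pt x, \<phi>) \<and> pt x \<in> A0" if x: "x \<in> fiber_obj E F b" for x
    proof -
      have xE: "x \<in> Ob E" and Fx: "fo F x = b" using x by (simp_all add: fiber_obj_def)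
      have "fo H x \<in> Ob ?T" using fun_ob[OF Hf xE] .
      then obtain B0 B1 a \<psi> where y: "fo H x = (B0, B1, a, \<psi>)" "a \<in> B0"
        by (rule T_Ob_cases) blast
      have "fo p_Delta (fo H x) = fo G b" using co xE Fx by auto
      then show ?thesis using y Gb by (simp add: p_simps pt_def)
    qed
    have "inj_on pt (fiber_obj E F b)"
    proof (rule inj_onI)
      fix x1 x2 assume x1: "x1 \<in> fiber_obj E F b" and x2: "x2 \<in> fiber_obj E F b" and e: "pt x1 = pt x2"
      have "fo ?C x1 = fo ?C x2" using Hx[OF x1] Hx[OF x2] e x1 x2 by (simp add: fiber_obj_def)
      note eq = this
      have e1: "fo K (fo ?C x1) = x1" using KC1 x1 unfolding fiber_obj_def by blast
      have e2: "fo K (fo ?C x2) = x2" using KC1 x2 unfolding fiber_obj_def by blast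
      have "x1 = fo K (fo ?C x1)" using e1 by (rule sym)
      also have "\<dots> = fo K (fo ?C x2)" using eq by (rule arg_cong)
      also have "\<dots> = x2" using e2 .
      finally show "x1 = x2" .
    qed
    moreover have "pt ` fiber_obj E F b \<subseteq> A0" using Hx by blast
    ultimately have "|fiber_obj E F b| \<le>o |A0|" using card_of_ordLeq by blast
    then show "|fiber_obj E F b| <o \<kappa>" using Gb(2) ordLeq_ordLess_trans by blast
  qed
  show ?thesis using df fib by blast
qed



locale bwd =
  fixes \<kappa> :: "'u rel" and E :: "('eo, 'ea) gpdG" and B :: "('bo, 'ba) gpdG"
    and F :: "('eo, 'ea, 'bo, 'ba) fnctr"
  assumes Fm: "is_morG E B F" and df: "discrete_fibration E B F"
    and small: "\<forall>b\<in>Ob B. |fiber_obj E F b| <o \<kappa>" and card: "Card_order \<kappa>"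
begin

lemma EG: "is_gpdG E" and BG: "is_gpdG B" and Eg: "is_gpd E" and Bg: "is_gpd B" and Ff: "is_functor E B F"
  using Fm by (simp_all add: is_morG_def is_gpdG_def)

definition fib :: "'bo \<Rightarrow> 'eo set" where "fib b = fiber_obj E F b"

lemma fib_iff: "x \<in> fib b \<longleftrightarrow> x \<in> Ob E \<and> fo F x = b"
  by (simp add: fib_def fiber_obj_def)

lemma fib_small: "b \<in> Ob B \<Longrightarrow> |fib b| <o \<kappa>"
  using small by (simp add: fib_def)

lemma enc_exists: "\<exists>f :: 'eo \<Rightarrow> 'u. inj_on f (fib b)"
proof (cases "b \<in> Ob B")
  case True
  have 1: "|fib b| \<le>o \<kappa>" using ordLess_imp_ordLeq[OF fib_small[OF True]] .
  have 2: "\<kappa> =o |Field \<kappa>|" using ordIso_symmetric[OF card_of_Field_ordIso[OF card]] .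
  have "|fib b| \<le>o |Field \<kappa>|" using ordLeq_ordIso_trans[OF 1 2] .
  then have "\<exists>f. inj_on f (fib b) \<and> f ` fib b \<subseteq> Field \<kappa>" unfolding card_of_ordLeq .
  then show ?thesis by blast
next
  case False
  then have "fib b = {}" using fun_ob[OF Ff] by (auto simp: fib_iff)
  then show ?thesis by simp
qed

definition enc :: "'bo \<Rightarrow> 'eo \<Rightarrow> 'u" where "enc b = (SOME f. inj_on f (fib b))"

lemma enc_inj: "inj_on (enc b) (fib b)"
  unfolding enc_def using enc_exists by (rule someI_ex)

definition A :: "'bo \<Rightarrow> 'u set" where "A b = enc b ` fib b"
definition dec :: "'bo \<Rightarrow> 'u \<Rightarrow> 'eo" where "dec b = the_inv_into (fib b) (enc b)"

lemma dec_enc: "x \<in> fib b \<Longrightarrow> dec b (enc b x) = x"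
  unfolding dec_def using enc_inj by (rule the_inv_into_f_f)

lemma enc_dec: "a \<in> A b \<Longrightarrow> enc b (dec b a) = a"
  unfolding dec_def A_def using enc_inj by (rule f_the_inv_into_f)

lemma dec_mem: "a \<in> A b \<Longrightarrow> dec b a \<in> fib b"
  unfolding dec_def A_def using enc_inj by (rule the_inv_into_into) auto

lemma enc_mem: "x \<in> fib b \<Longrightarrow> enc b x \<in> A b"
  unfolding A_def by simp

lemma A_small: "b \<in> Ob B \<Longrightarrow> |A b| <o \<kappa>"
proof -
  assume b: "b \<in> Ob B"
  have "|enc b ` fib b| \<le>o |fib b|" by (rule card_of_image)
  then show ?thesis unfolding A_def using fib_small[OF b] by (rule ordLeq_ordLess_trans)
qed

lemma fib_invo: "x \<in> fib b \<Longrightarrow> invo E x \<in> fib (invo B b)"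
  using gG_invo_ob[OF EG] mG_invo[OF Fm] by (auto simp: fib_iff)

lemma fib_ob: "x \<in> fib b \<Longrightarrow> x \<in> Ob E" and fib_F: "x \<in> fib b \<Longrightarrow> fo F x = b"
  by (simp_all add: fib_iff)

lemma fib_self: "x \<in> Ob E \<Longrightarrow> x \<in> fib (fo F x)"
  by (simp add: fib_iff)

definition phi :: "'bo \<Rightarrow> 'u \<Rightarrow> 'u" where
  "phi b = restrict (\<lambda>a. enc (invo B b) (invo E (dec b a))) (A b)"

lemma phi_enc: "x \<in> fib b \<Longrightarrow> phi b (enc b x) = enc (invo B b) (invo E x)"
  by (simp add: phi_def enc_mem dec_enc)

lemma phi_mem: "a \<in> A b \<Longrightarrow> phi b a \<in> A (invo B b)"
  by (simp add: phi_def enc_mem fib_invo dec_mem)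

lemma phi_phi: "b \<in> Ob B \<Longrightarrow> a \<in> A b \<Longrightarrow> phi (invo B b) (phi b a) = a"
proof -
  assume b: "b \<in> Ob B" and a: "a \<in> A b"
  have x: "dec b a \<in> fib b" using dec_mem[OF a] .
  have "phi b a = enc (invo B b) (invo E (dec b a))" using a by (simp add: phi_def)
  then have "phi (invo B b) (phi b a) = enc (invo B (invo B b)) (invo E (invo E (dec b a)))"
    using phi_enc[OF fib_invo[OF x]] by simp
  also have "\<dots> = enc b (dec b a)" using gG_invo_invo[OF BG b] gG_invo_invo[OF EG fib_ob[OF x]] by simp
  also have "\<dots> = a" using enc_dec[OF a] .
  finally show ?thesis .
qed

lemma phi_bij: "b \<in> Ob B \<Longrightarrow> ext_bij (phi b) (A b) (A (invo B b))"
proof -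
  assume b: "b \<in> Ob B"
  have ib: "invo B b \<in> Ob B" using gG_invo_ob[OF BG b] .
  have "bij_betw (phi b) (A b) (A (invo B b))"
  proof (rule bij_betw_byWitness[where f' = "phi (invo B b)"])
    show "\<forall>a\<in>A b. phi (invo B b) (phi b a) = a" using phi_phi[OF b] by blast
    show "\<forall>a'\<in>A (invo B b). phi b (phi (invo B b) a') = a'"
      using phi_phi[OF ib] gG_invo_invo[OF BG b] by simp
    show "phi b ` A b \<subseteq> A (invo B b)" using phi_mem by blast
    show "phi (invo B b) ` A (invo B b) \<subseteq> A b" using phi_mem[of _ "invo B b"] gG_invo_invo[OF BG b] by auto
  qed
  then show ?thesis unfolding ext_bij_def by (simp add: phi_def)
qed

lemma phi_inv: "b \<in> Ob B \<Longrightarrow> ext_inv (phi b) (A b) (A (invo B b)) = phi (invo B b)"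
  apply (rule EB_inv_unique[OF phi_bij])
    apply assumption
   apply (simp add: phi_def)
  by (rule phi_phi)

section \<open>Lifting\<close>

definition lift :: "'ba \<Rightarrow> 'eo \<Rightarrow> 'ea" where
  "lift h x = (THE h'. h' \<in> Ar E \<and> Dom E h' = x \<and> fa F h' = h)"

lemma lift_props:
  assumes "x \<in> Ob E" "h \<in> Ar B" "Dom B h = fo F x"
  shows "lift h x \<in> Ar E" "Dom E (lift h x) = x" "fa F (lift h x) = h"
proof -
  have "\<exists>!h'. h' \<in> Ar E \<and> Dom E h' = x \<and> fa F h' = h" using df assms unfolding discrete_fibration_def by blast
  then have "lift h x \<in> Ar E \<and> Dom E (lift h x) = x \<and> fa F (lift h x) = h"
    unfolding lift_def by (rule theI')
  then show "lift h x \<in> Ar E" "Dom E (lift h x) = x" "fa F (lift h x) = h" by blast+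
qed

lemma lift_uniq:
  assumes k: "k \<in> Ar E" shows "lift (fa F k) (Dom E k) = k"
proof -
  have "\<exists>!h'. h' \<in> Ar E \<and> Dom E h' = Dom E k \<and> fa F h' = fa F k"
    using df gpd_dom[OF Eg k] fun_ar[OF Ff k] fun_dom[OF Ff k] unfolding discrete_fibration_def by blast
  then show ?thesis unfolding lift_def by (rule the1_equality) (simp add: k)
qed

lemma lift_uniq':
  assumes "k \<in> Ar E" "Dom E k = x" "fa F k = h" shows "lift h x = k"
  using lift_uniq[OF assms(1)] assms(2,3) by simp

lemma lift_fib:
  assumes x: "x \<in> fib (Dom B h)" and h: "h \<in> Ar B"
  shows "lift h x \<in> Ar E" "Dom E (lift h x) = x" "fa F (lift h x) = h" "Cod E (lift h x) \<in> fib (Cod B h)"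
proof -
  have p: "x \<in> Ob E" "Dom B h = fo F x" using x by (simp_all add: fib_iff)
  show l: "lift h x \<in> Ar E" "Dom E (lift h x) = x" "fa F (lift h x) = h" using lift_props[OF p(1) h p(2)] by blast+
  show "Cod E (lift h x) \<in> fib (Cod B h)"
    using gpd_cod[OF Eg l(1)] fun_cod[OF Ff l(1)] l(3) by (simp add: fib_iff)
qed

lemma lift_idt:
  assumes x: "x \<in> Ob E" shows "lift (Idt B (fo F x)) x = Idt E x"
  by (rule lift_uniq') (simp_all add: gpd_idt[OF Eg x] gpd_idt_dom[OF Eg x] fun_idt[OF Ff x])

lemma lift_comp:
  assumes x: "x \<in> fib (Dom B h)" and h: "h \<in> Ar B" and g: "g \<in> Ar B" and hg: "Cod B h = Dom B g"
  shows "lift (Comp B g h) x = Comp E (lift g (Cod E (lift h x))) (lift h x)"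
proof (rule lift_uniq')
  note l1 = lift_fib[OF x h]
  have y: "Cod E (lift h x) \<in> fib (Dom B g)" using l1(4) hg by simp
  note l2 = lift_fib[OF y g]
  have c: "Cod E (lift h x) = Dom E (lift g (Cod E (lift h x)))" using l2(2) by simp
  show "Comp E (lift g (Cod E (lift h x))) (lift h x) \<in> Ar E" using gpd_comp[OF Eg l1(1) l2(1) c] .
  show "Dom E (Comp E (lift g (Cod E (lift h x))) (lift h x)) = x" using gpd_comp_dom[OF Eg l1(1) l2(1) c] l1(2) by simp
  show "fa F (Comp E (lift g (Cod E (lift h x))) (lift h x)) = Comp B g h"
    using fun_comp[OF Ff l1(1) l2(1) c] l1(3) l2(3) by simp
qed

lemma lift_inva:
  assumes x: "x \<in> fib (Dom B h)" and h: "h \<in> Ar B"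
  shows "lift (inva B h) (invo E x) = inva E (lift h x)"
proof (rule lift_uniq')
  note l = lift_fib[OF x h]
  show "inva E (lift h x) \<in> Ar E" using gG_inva_ar[OF EG l(1)] .
  show "Dom E (inva E (lift h x)) = invo E x" using gG_inva_dom[OF EG l(1)] l(2) by simp
  show "fa F (inva E (lift h x)) = inva B h" using mG_inva[OF Fm l(1)] l(3) by simp
qed

section \<open>Transport\<close>

definition tr :: "'ba \<Rightarrow> 'u \<Rightarrow> 'u" where
  "tr h = restrict (\<lambda>a. enc (Cod B h) (Cod E (lift h (dec (Dom B h) a)))) (A (Dom B h))"

lemma tr_dec: "a \<in> A (Dom B h) \<Longrightarrow> tr h a = enc (Cod B h) (Cod E (lift h (dec (Dom B h) a)))"
  by (simp add: tr_def)

lemma tr_enc: "x \<in> fib (Dom B h) \<Longrightarrow> tr h (enc (Dom B h) x) = enc (Cod B h) (Cod E (lift h x))"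
  by (simp add: tr_dec enc_mem dec_enc)

lemma tr_mem: "h \<in> Ar B \<Longrightarrow> a \<in> A (Dom B h) \<Longrightarrow> tr h a \<in> A (Cod B h)"
  by (simp add: tr_dec enc_mem lift_fib dec_mem)

lemma tr_ext: "tr h \<in> extensional (A (Dom B h))"
  by (simp add: tr_def)

lemma tr_idt: assumes b: "b \<in> Ob B" shows "tr (Idt B b) = restrict id (A b)"
proof (rule extensionalityI[of _ "A b"])
  show "tr (Idt B b) \<in> extensional (A b)" using tr_ext[of "Idt B b"] gpd_idt_dom[OF Bg b] by simp
  show "restrict id (A b) \<in> extensional (A b)" by simp
  fix a assume a: "a \<in> A b"
  have x: "dec b a \<in> fib b" using dec_mem[OF a] .
  have "lift (Idt B b) (dec b a) = Idt E (dec b a)" using lift_idt[OF fib_ob[OF x]] fib_F[OF x] by simp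
  then show "tr (Idt B b) a = restrict id (A b) a"
    using a gpd_idt_dom[OF Bg b] gpd_idt_cod[OF Bg b] gpd_idt_cod[OF Eg fib_ob[OF x]]
    by (simp add: tr_dec enc_dec)
qed

lemma tr_comp:
  assumes h: "h \<in> Ar B" and g: "g \<in> Ar B" and hg: "Cod B h = Dom B g"
  shows "tr (Comp B g h) = compose (A (Dom B h)) (tr g) (tr h)"
proof (rule extensionalityI[of _ "A (Dom B h)"])
  show "tr (Comp B g h) \<in> extensional (A (Dom B h))" using tr_ext[of "Comp B g h"] gpd_comp_dom[OF Bg h g hg] by simp
  show "compose (A (Dom B h)) (tr g) (tr h) \<in> extensional (A (Dom B h))" by (simp add: compose_def)
  fix a assume a: "a \<in> A (Dom B h)"
  have x: "dec (Dom B h) a \<in> fib (Dom B h)" using dec_mem[OF a] .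
  note l1 = lift_fib[OF x h]
  have y: "Cod E (lift h (dec (Dom B h) a)) \<in> fib (Dom B g)" using l1(4) hg by simp
  note l2 = lift_fib[OF y g]
  have c: "Cod E (lift h (dec (Dom B h) a)) = Dom E (lift g (Cod E (lift h (dec (Dom B h) a))))" using l2(2) by simp
  have "tr (Comp B g h) a = enc (Cod B g) (Cod E (lift (Comp B g h) (dec (Dom B h) a)))"
    using tr_dec[of a "Comp B g h"] a gpd_comp_dom[OF Bg h g hg] gpd_comp_cod[OF Bg h g hg] by simp
  also have "\<dots> = enc (Cod B g) (Cod E (lift g (Cod E (lift h (dec (Dom B h) a)))))"
    using lift_comp[OF x h g hg] gpd_comp_cod[OF Eg l1(1) l2(1) c] by simp
  also have "\<dots> = tr g (tr h a)"
    using tr_enc[OF y] tr_dec[OF a] hg by simp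
  finally show "tr (Comp B g h) a = compose (A (Dom B h)) (tr g) (tr h) a" using a by (simp add: compose_def)
qed

lemma tr_bij: assumes h: "h \<in> Ar B" shows "ext_bij (tr h) (A (Dom B h)) (A (Cod B h))"
proof -
  obtain h' where h': "h' \<in> Ar B" "Dom B h' = Cod B h" "Cod B h' = Dom B h"
     "Comp B h' h = Idt B (Dom B h)" "Comp B h h' = Idt B (Cod B h)"
    using gpd_inv_ex[OF Bg h] by blast
  have "bij_betw (tr h) (A (Dom B h)) (A (Cod B h))"
  proof (rule bij_betw_byWitness[where f' = "tr h'"])
    show "\<forall>a\<in>A (Dom B h). tr h' (tr h a) = a"
    proof
      fix a assume a: "a \<in> A (Dom B h)"
      have "tr h' (tr h a) = compose (A (Dom B h)) (tr h') (tr h) a" using a by (simp add: compose_def)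
      also have "\<dots> = tr (Comp B h' h) a" using tr_comp[OF h h'(1)] h'(2) by simp
      also have "\<dots> = a" using h'(4) tr_idt[OF gpd_dom[OF Bg h]] a by simp
      finally show "tr h' (tr h a) = a" .
    qed
    show "\<forall>a\<in>A (Cod B h). tr h (tr h' a) = a"
    proof
      fix a assume a: "a \<in> A (Cod B h)"
      have "tr h (tr h' a) = compose (A (Dom B h')) (tr h) (tr h') a" using a h'(2) by (simp add: compose_def)
      also have "\<dots> = tr (Comp B h h') a" using tr_comp[OF h'(1) h] h'(3) by simp
      also have "\<dots> = a" using h'(5) tr_idt[OF gpd_cod[OF Bg h]] a by simp
      finally show "tr h (tr h' a) = a" .
    qed
    show "tr h ` A (Dom B h) \<subseteq> A (Cod B h)" using tr_mem[OF h] by blast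
    show "tr h' ` A (Cod B h) \<subseteq> A (Dom B h)" using tr_mem[OF h'(1)] h'(2,3) by auto
  qed
  then show ?thesis unfolding ext_bij_def using tr_ext by blast
qed

lemma tr_phi:
  assumes h: "h \<in> Ar B" and a: "a \<in> A (Dom B h)"
  shows "phi (Cod B h) (tr h a) = tr (inva B h) (phi (Dom B h) a)"
proof -
  let ?x = "dec (Dom B h) a"
  have x: "?x \<in> fib (Dom B h)" using dec_mem[OF a] .
  note l = lift_fib[OF x h]
  have ix: "invo E ?x \<in> fib (Dom B (inva B h))" using fib_invo[OF x] gG_inva_dom[OF BG h] by simp
  have "phi (Cod B h) (tr h a) = enc (invo B (Cod B h)) (invo E (Cod E (lift h ?x)))"
    using tr_dec[OF a] phi_enc[OF l(4)] by simp
  also have "\<dots> = enc (Cod B (inva B h)) (Cod E (lift (inva B h) (invo E ?x)))"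
    using lift_inva[OF x h] gG_inva_cod[OF EG l(1)] gG_inva_cod[OF BG h] by simp
  also have "\<dots> = tr (inva B h) (enc (Dom B (inva B h)) (invo E ?x))" using tr_enc[OF ix] by simp
  also have "\<dots> = tr (inva B h) (phi (Dom B h) a)"
    using phi_enc[OF x] enc_dec[OF a] gG_inva_dom[OF BG h] by simp
  finally show ?thesis .
qed

end



context bwd begin

definition Gob :: "'bo \<Rightarrow> 'u UDob" where "Gob b = (A b, A (invo B b), phi b)"
definition Gar :: "'ba \<Rightarrow> 'u UDar" where "Gar h = (Gob (Dom B h), Gob (Cod B h), tr h, tr (inva B h))"
definition GG :: "('bo, 'ba, 'u UDob, 'u UDar) fnctr" where "GG = \<lparr>fo = Gob, fa = Gar\<rparr>"

lemma GG_simps [simp]: "fo GG = Gob" "fa GG = Gar" by (simp_all add: GG_def)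

lemma Gob_mem: "b \<in> Ob B \<Longrightarrow> Gob b \<in> UD_objs \<kappa>"
  by (simp add: Gob_def UD_objs_iff A_small gG_invo_ob[OF BG] phi_bij)

lemma tr_inva_bij: "h \<in> Ar B \<Longrightarrow> ext_bij (tr (inva B h)) (A (invo B (Dom B h))) (A (invo B (Cod B h)))"
  using tr_bij[OF gG_inva_ar[OF BG]] gG_inva_dom[OF BG] gG_inva_cod[OF BG] by metis

lemma Gar_mem: "h \<in> Ar B \<Longrightarrow> Gar h \<in> Ar (U_Delta \<kappa>)"
  unfolding Gar_def Gob_def
  by (simp add: U_Ar_iff Gob_mem[unfolded Gob_def] gpd_dom[OF Bg] gpd_cod[OF Bg] tr_bij tr_inva_bij tr_phi)

lemma G_morG: "is_morG B (U_Delta \<kappa>) GG"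
proof (rule is_morG_intro[OF BG U_is_gpdG])
  show "is_functor B (U_Delta \<kappa>) GG"
  proof (rule is_functor_intro)
    fix x assume "x \<in> Ob B" then show "fo GG x \<in> Ob (U_Delta \<kappa>)" by (simp add: U_simps Gob_mem)
  next
    fix f assume "f \<in> Ar B"
    then show "fa GG f \<in> Ar (U_Delta \<kappa>) \<and> Dom (U_Delta \<kappa>) (fa GG f) = fo GG (Dom B f) \<and>
      Cod (U_Delta \<kappa>) (fa GG f) = fo GG (Cod B f)" by (simp add: Gar_mem) (simp add: Gar_def U_simps)
  next
    fix x assume x: "x \<in> Ob B"
    then show "fa GG (Idt B x) = Idt (U_Delta \<kappa>) (fo GG x)"
      by (simp add: Gar_def Gob_def U_simps gpd_idt_dom[OF Bg] gpd_idt_cod[OF Bg] gG_inva_idt[OF BG]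
          tr_idt gG_invo_ob[OF BG])
  next
    fix f g assume f: "f \<in> Ar B" and g: "g \<in> Ar B" and fg: "Cod B f = Dom B g"
    have i: "Cod B (inva B f) = Dom B (inva B g)" using fg by (simp add: gG_inva_dom[OF BG g] gG_inva_cod[OF BG f])
    show "fa GG (Comp B g f) = Comp (U_Delta \<kappa>) (fa GG g) (fa GG f)"
      using f g fg i
      by (simp add: Gar_def Gob_def U_simps gpd_comp_dom[OF Bg] gpd_comp_cod[OF Bg] gG_inva_comp[OF BG]
          tr_comp gG_inva_ar[OF BG] gG_inva_dom[OF BG])
  qed
next
  fix x assume x: "x \<in> Ob B"
  show "fo GG (invo B x) = invo (U_Delta \<kappa>) (fo GG x)"
    using x by (simp add: Gob_def U_simps gG_invo_invo[OF BG] phi_inv)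
next
  fix f assume f: "f \<in> Ar B"
  show "fa GG (inva B f) = inva (U_Delta \<kappa>) (fa GG f)"
    using f by (simp add: Gar_def Gob_def U_simps gG_inva_dom[OF BG] gG_inva_cod[OF BG] gG_inva_inva[OF BG]
       gG_invo_invo[OF BG] phi_inv gpd_dom[OF Bg] gpd_cod[OF Bg])
qed

definition Hob :: "'eo \<Rightarrow> 'u UDtob" where
  "Hob x = (A (fo F x), A (invo B (fo F x)), enc (fo F x) x, phi (fo F x))"
definition Har :: "'ea \<Rightarrow> 'u UDtar" where
  "Har f = (Hob (Dom E f), Hob (Cod E f), tr (fa F f), tr (inva B (fa F f)))"
definition HH :: "('eo, 'ea, 'u UDtob, 'u UDtar) fnctr" where "HH = \<lparr>fo = Hob, fa = Har\<rparr>"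

lemma HH_simps [simp]: "fo HH = Hob" "fa HH = Har" by (simp_all add: HH_def)

lemma Hob_mem: "x \<in> Ob E \<Longrightarrow> Hob x \<in> UDt_objs \<kappa>"
  using Gob_mem[OF fun_ob[OF Ff]] by (simp add: Hob_def Gob_def UDt_objs_iff UD_objs_iff enc_mem fib_self)

lemma Har_mem: assumes f: "f \<in> Ar E" shows "Har f \<in> Ar (U_Delta_tilde \<kappa>)"
proof -
  have Ff1: "fa F f \<in> Ar B" "Dom B (fa F f) = fo F (Dom E f)" "Cod B (fa F f) = fo F (Cod E f)"
    using fun_ar[OF Ff f] fun_dom[OF Ff f] fun_cod[OF Ff f] by auto
  have d: "Dom E f \<in> fib (Dom B (fa F f))" using Ff1(2) gpd_dom[OF Eg f] by (simp add: fib_iff)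
  have pt: "tr (fa F f) (enc (fo F (Dom E f)) (Dom E f)) = enc (fo F (Cod E f)) (Cod E f)"
    using tr_enc[OF d] lift_uniq[OF f] Ff1 by simp
  have "Gar (fa F f) \<in> Ar (U_Delta \<kappa>)" using Gar_mem[OF Ff1(1)] .
  then show ?thesis
    using Hob_mem[OF gpd_dom[OF Eg f]] Hob_mem[OF gpd_cod[OF Eg f]] pt Ff1
    unfolding Har_def Hob_def Gar_def Gob_def
    by (simp add: U_Ar_iff T_Ar_iff UDt_objs_iff)
qed

lemma phi_enc_self: "x \<in> Ob E \<Longrightarrow> phi (fo F x) (enc (fo F x) x) = enc (fo F (invo E x)) (invo E x)"
  using phi_enc[OF fib_self] mG_invo[OF Fm] by simp

lemma H_morG: "is_morG E (U_Delta_tilde \<kappa>) HH"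
proof (rule is_morG_intro[OF EG T_is_gpdG])
  show "is_functor E (U_Delta_tilde \<kappa>) HH"
  proof (rule is_functor_intro)
    fix x assume "x \<in> Ob E" then show "fo HH x \<in> Ob (U_Delta_tilde \<kappa>)" by (simp add: T_simps Hob_mem)
  next
    fix f assume "f \<in> Ar E"
    then show "fa HH f \<in> Ar (U_Delta_tilde \<kappa>) \<and> Dom (U_Delta_tilde \<kappa>) (fa HH f) = fo HH (Dom E f) \<and>
      Cod (U_Delta_tilde \<kappa>) (fa HH f) = fo HH (Cod E f)" by (simp add: Har_mem) (simp add: Har_def T_simps)
  next
    fix x assume x: "x \<in> Ob E"
    have "fa HH (Idt E x) = (Hob x, Hob x, tr (Idt B (fo F x)), tr (inva B (Idt B (fo F x))))"
      using x by (simp add: Har_def gpd_idt_dom[OF Eg] gpd_idt_cod[OF Eg] fun_idt[OF Ff])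
    also have "\<dots> = Idt (U_Delta_tilde \<kappa>) (fo HH x)"
      using x fun_ob[OF Ff x] by (simp add: Hob_def T_simps gG_inva_idt[OF BG] tr_idt gG_invo_ob[OF BG])
    finally show "fa HH (Idt E x) = Idt (U_Delta_tilde \<kappa>) (fo HH x)" .
  next
    fix f g assume f: "f \<in> Ar E" and g: "g \<in> Ar E" and fg: "Cod E f = Dom E g"
    have Fa: "fa F f \<in> Ar B" "fa F g \<in> Ar B" using fun_ar[OF Ff] f g by auto
    have Fc: "Cod B (fa F f) = Dom B (fa F g)" using fg fun_dom[OF Ff g] fun_cod[OF Ff f] by simp
    have i: "Cod B (inva B (fa F f)) = Dom B (inva B (fa F g))"
      using Fc by (simp add: gG_inva_dom[OF BG Fa(2)] gG_inva_cod[OF BG Fa(1)])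
    have "fa HH (Comp E g f) = (Hob (Dom E f), Hob (Cod E g), tr (Comp B (fa F g) (fa F f)),
        tr (Comp B (inva B (fa F g)) (inva B (fa F f))))"
      using f g fg Fa Fc by (simp add: Har_def gpd_comp_dom[OF Eg] gpd_comp_cod[OF Eg] fun_comp[OF Ff] gG_inva_comp[OF BG])
    also have "\<dots> = Comp (U_Delta_tilde \<kappa>) (fa HH g) (fa HH f)"
      using f g fg Fa Fc i
      by (simp add: Har_def Hob_def T_simps tr_comp gG_inva_ar[OF BG] gG_inva_dom[OF BG] fun_dom[OF Ff])
    finally show "fa HH (Comp E g f) = Comp (U_Delta_tilde \<kappa>) (fa HH g) (fa HH f)" .
  qed
next
  fix x assume x: "x \<in> Ob E"
  show "fo HH (invo E x) = invo (U_Delta_tilde \<kappa>) (fo HH x)"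
    using x fun_ob[OF Ff x] by (simp add: Hob_def T_simps gG_invo_invo[OF BG] phi_inv mG_invo[OF Fm] phi_enc_self)
next
  fix f assume f: "f \<in> Ar E"
  have Fa: "fa F f \<in> Ar B" using fun_ar[OF Ff f] .
  show "fa HH (inva E f) = inva (U_Delta_tilde \<kappa>) (fa HH f)"
    using f Fa gpd_dom[OF Eg f] gpd_cod[OF Eg f] fun_ob[OF Ff gpd_dom[OF Eg f]] fun_ob[OF Ff gpd_cod[OF Eg f]]
    by (simp add: Har_def Hob_def T_simps gG_inva_dom[OF EG] gG_inva_cod[OF EG] mG_inva[OF Fm] gG_inva_inva[OF BG]
       gG_invo_invo[OF BG] phi_inv mG_invo[OF Fm] phi_enc_self)
qed

end



context bwd begin

abbreviation "TT \<equiv> U_Delta_tilde \<kappa>"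
abbreviation "QQ \<equiv> pb_obj B TT GG p_Delta"

definition pt :: "'u UDtob \<Rightarrow> 'u" where "pt y = fst (snd (snd y))"

lemma pb_ob_char:
  assumes "(b, y) \<in> Ob QQ"
  obtains a where "b \<in> Ob B" "y = (A b, A (invo B b), a, phi b)" "a \<in> A b"
proof -
  have b: "b \<in> Ob B" and y: "y \<in> Ob TT" and e: "Gob b = fo p_Delta y" using assms by (simp_all add: pb_simps)
  from y obtain A0 A1 a \<phi> where y': "y = (A0,A1,a,\<phi>)" "a \<in> A0" by (rule T_Ob_cases) blast
  have e': "A b = A0" "A (invo B b) = A1" "phi b = \<phi>" using e y'(1) by (simp_all add: Gob_def p_simps)
  have "y = (A b, A (invo B b), a, phi b)" using y'(1) e' by simp
  moreover have "a \<in> A b" using y'(2) e' by simp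
  ultimately show ?thesis by (rule that[OF b])
qed

lemma pb_ar_char:
  assumes "(u, v) \<in> Ar QQ"
  obtains a where "u \<in> Ar B" "a \<in> A (Dom B u)"
    "v = ((A (Dom B u), A (invo B (Dom B u)), a, phi (Dom B u)),
          (A (Cod B u), A (invo B (Cod B u)), tr u a, phi (Cod B u)), tr u, tr (inva B u))"
proof -
  have u: "u \<in> Ar B" and v: "v \<in> Ar TT" and e: "Gar u = fa p_Delta v" using assms by (simp_all add: pb_simps)
  from v obtain A0 A1 a \<phi> B0 B1 b \<psi> \<rho>0 \<rho>1 where v': "v = ((A0,A1,a,\<phi>),(B0,B1,b,\<psi>),\<rho>0,\<rho>1)"
    "(A0,A1,a,\<phi>) \<in> UDt_objs \<kappa>" "\<rho>0 a = b" by (rule T_Ar_cases) blast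
  have e': "A (Dom B u) = A0" "A (invo B (Dom B u)) = A1" "phi (Dom B u) = \<phi>"
    "A (Cod B u) = B0" "A (invo B (Cod B u)) = B1" "phi (Cod B u) = \<psi>" "tr u = \<rho>0" "tr (inva B u) = \<rho>1"
    using e v'(1) by (simp_all add: Gar_def Gob_def p_simps)
  have "a \<in> A (Dom B u)" using v'(2) e' by (simp add: UDt_objs_iff)
  moreover have "v = ((A (Dom B u), A (invo B (Dom B u)), a, phi (Dom B u)),
          (A (Cod B u), A (invo B (Cod B u)), tr u a, phi (Cod B u)), tr u, tr (inva B u))"
    using v'(1,3) e' by simp
  ultimately show ?thesis by (rule that[OF u])
qed

definition KK :: "('bo \<times> 'u UDtob, 'ba \<times> 'u UDtar, 'eo, 'ea) fnctr" where
  "KK = \<lparr>fo = (\<lambda>p. dec (fst p) (pt (snd p))),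
         fa = (\<lambda>q. lift (fst q) (dec (Dom B (fst q)) (pt (Dom TT (snd q)))))\<rparr>"

lemma KK_simps [simp]: "fo KK (b, y) = dec b (pt y)"
  "fa KK (u, v) = lift u (dec (Dom B u) (pt (Dom TT v)))"
  by (simp_all add: KK_def)

lemma QQ_gG: "is_gpdG QQ" using pb_is_gpdG[OF G_morG p_morG] .

lemma K_ar:
  assumes uv: "(u, v) \<in> Ar QQ"
  shows "fa KK (u, v) \<in> Ar E" "Dom E (fa KK (u, v)) = fo KK (Dom QQ (u, v))"
    "Cod E (fa KK (u, v)) = fo KK (Cod QQ (u, v))"
proof -
  obtain a where c: "u \<in> Ar B" "a \<in> A (Dom B u)"
    "v = ((A (Dom B u), A (invo B (Dom B u)), a, phi (Dom B u)),
          (A (Cod B u), A (invo B (Cod B u)), tr u a, phi (Cod B u)), tr u, tr (inva B u))"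
    using pb_ar_char[OF uv] by blast
  have x: "dec (Dom B u) a \<in> fib (Dom B u)" using dec_mem[OF c(2)] .
  note l = lift_fib[OF x c(1)]
  have k: "fa KK (u, v) = lift u (dec (Dom B u) a)" using c(3) by (simp add: T_simps pt_def)
  show "fa KK (u, v) \<in> Ar E" using l(1) k by simp
  show "Dom E (fa KK (u, v)) = fo KK (Dom QQ (u, v))" using l(2) k c(3) by (simp add: pb_simps T_simps pt_def)
  have "tr u a = enc (Cod B u) (Cod E (lift u (dec (Dom B u) a)))" using tr_dec[OF c(2)] .
  then show "Cod E (fa KK (u, v)) = fo KK (Cod QQ (u, v))"
    using k c(3) dec_enc[OF l(4)] by (simp add: pb_simps pt_def T_simps)
qed

lemma K_morG: "is_morG QQ E KK"
proof (rule is_morG_intro[OF QQ_gG EG])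
  show "is_functor QQ E KK"
  proof (rule is_functor_intro)
    fix p assume p: "p \<in> Ob QQ"
    obtain b y where by': "p = (b, y)" by (cases p)
    obtain a where c: "b \<in> Ob B" "y = (A b, A (invo B b), a, phi b)" "a \<in> A b"
      using pb_ob_char[OF p[unfolded by']] by blast
    show "fo KK p \<in> Ob E" using fib_ob[OF dec_mem[OF c(3)]] by' c(2) by (simp add: pt_def)
  next
    fix q assume q: "q \<in> Ar QQ"
    obtain u v where uv: "q = (u, v)" by (cases q)
    show "fa KK q \<in> Ar E \<and> Dom E (fa KK q) = fo KK (Dom QQ q) \<and> Cod E (fa KK q) = fo KK (Cod QQ q)"
      using K_ar[OF q[unfolded uv]] uv by simp
  next
    fix p assume p: "p \<in> Ob QQ"
    obtain b y where by': "p = (b, y)" by (cases p)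
    obtain a where c: "b \<in> Ob B" "y = (A b, A (invo B b), a, phi b)" "a \<in> A b"
      using pb_ob_char[OF p[unfolded by']] by blast
    have x: "dec b a \<in> fib b" using dec_mem[OF c(3)] .
    show "fa KK (Idt QQ p) = Idt E (fo KK p)"
      using by' c(2) lift_idt[OF fib_ob[OF x]] fib_F[OF x] gpd_idt_dom[OF Bg c(1)] by (simp add: pb_simps T_simps pt_def)
  next
    fix q q' assume q: "q \<in> Ar QQ" and q': "q' \<in> Ar QQ" and qq: "Cod QQ q = Dom QQ q'"
    obtain u v where uv: "q = (u, v)" by (cases q)
    obtain u' v' where uv': "q' = (u', v')" by (cases q')
    obtain a where c: "u \<in> Ar B" "a \<in> A (Dom B u)"
      "v = ((A (Dom B u), A (invo B (Dom B u)), a, phi (Dom B u)),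
          (A (Cod B u), A (invo B (Cod B u)), tr u a, phi (Cod B u)), tr u, tr (inva B u))"
      using pb_ar_char[OF q[unfolded uv]] by blast
    obtain a' where c': "u' \<in> Ar B" "a' \<in> A (Dom B u')"
      "v' = ((A (Dom B u'), A (invo B (Dom B u')), a', phi (Dom B u')),
          (A (Cod B u'), A (invo B (Cod B u')), tr u' a', phi (Cod B u')), tr u', tr (inva B u'))"
      using pb_ar_char[OF q'[unfolded uv']] by blast
    have cu: "Cod B u = Dom B u'" using qq uv uv' by (simp add: pb_simps)
    let ?x = "dec (Dom B u) a"
    have x: "?x \<in> fib (Dom B u)" using dec_mem[OF c(2)] .
    have dv: "pt (Dom TT (Comp TT v' v)) = a" using c(3) c'(3) by (simp add: T_simps pt_def)
    have k1: "fa KK q = lift u ?x" using uv c(3) by (simp add: T_simps pt_def)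
    have "fo KK (Cod QQ q) = Cod E (lift u ?x)" using K_ar(3)[OF q[unfolded uv]] uv k1 by simp
    then have "fo KK (Dom QQ q') = Cod E (lift u ?x)" using qq by simp
    then have e: "fa KK q' = lift u' (Cod E (lift u ?x))" using uv' c'(3) by (simp add: pb_simps T_simps pt_def)
    show "fa KK (Comp QQ q' q) = Comp E (fa KK q') (fa KK q)"
      using uv uv' dv lift_comp[OF x c(1) c'(1) cu] gpd_comp_dom[OF Bg c(1) c'(1) cu] e k1 by (simp add: pb_simps)
  qed
next
  fix p assume p: "p \<in> Ob QQ"
  obtain b y where by': "p = (b, y)" by (cases p)
  obtain a where c: "b \<in> Ob B" "y = (A b, A (invo B b), a, phi b)" "a \<in> A b"
    using pb_ob_char[OF p[unfolded by']] by blast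
  have x: "dec b a \<in> fib b" using dec_mem[OF c(3)] .
  have "pt (invo TT y) = phi b a" using c(2) by (simp add: T_simps pt_def)
  also have "\<dots> = enc (invo B b) (invo E (dec b a))" using phi_enc[OF x] enc_dec[OF c(3)] by simp
  finally show "fo KK (invo QQ p) = invo E (fo KK p)"
    using by' c(2) dec_enc[OF fib_invo[OF x]] by (simp add: pb_simps pt_def)
next
  fix q assume q: "q \<in> Ar QQ"
  obtain u v where uv: "q = (u, v)" by (cases q)
  obtain a where c: "u \<in> Ar B" "a \<in> A (Dom B u)"
    "v = ((A (Dom B u), A (invo B (Dom B u)), a, phi (Dom B u)),
        (A (Cod B u), A (invo B (Cod B u)), tr u a, phi (Cod B u)), tr u, tr (inva B u))"
    using pb_ar_char[OF q[unfolded uv]] by blast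
  let ?x = "dec (Dom B u) a"
  have x: "?x \<in> fib (Dom B u)" using dec_mem[OF c(2)] .
  have "pt (Dom TT (inva TT v)) = phi (Dom B u) a" using c(3) by (simp add: T_simps pt_def)
  also have "\<dots> = enc (invo B (Dom B u)) (invo E ?x)" using phi_enc[OF x] enc_dec[OF c(2)] by simp
  finally have e: "pt (Dom TT (inva TT v)) = enc (invo B (Dom B u)) (invo E ?x)" .
  have k: "fa KK q = lift u ?x" using uv c(3) by (simp add: T_simps pt_def)
  show "fa KK (inva QQ q) = inva E (fa KK q)"
    using uv e k dec_enc[OF fib_invo[OF x]] lift_inva[OF x c(1)] gG_inva_dom[OF BG c(1)] by (simp add: pb_simps)
qed

lemma backward_square: "is_pullback_square E B TT (U_Delta \<kappa>) F HH p_Delta GG"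
  unfolding is_pullback_square_def
proof (intro conjI)
  show "is_morG E B F" by (rule Fm)
  show "is_morG E TT HH" by (rule H_morG)
  show "is_morG TT (U_Delta \<kappa>) p_Delta" by (rule p_morG)
  show "is_morG B (U_Delta \<kappa>) GG" by (rule G_morG)
  show co: "\<forall>x\<in>Ob E. fo p_Delta (fo HH x) = fo GG (fo F x)" by (simp add: Hob_def Gob_def p_simps)
  show ca: "\<forall>f\<in>Ar E. fa p_Delta (fa HH f) = fa GG (fa F f)"
    by (simp add: Har_def Hob_def Gar_def Gob_def p_simps fun_dom[OF Ff] fun_cod[OF Ff])
  let ?C = "\<lparr>fo = \<lambda>x. (fo F x, fo HH x), fa = \<lambda>f. (fa F f, fa HH f)\<rparr>"
  have Cm: "is_morG E QQ ?C" using pair_morG[OF Fm H_morG G_morG p_morG co ca] .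
  show "is_isoG E QQ ?C"
    unfolding is_isoG_def
  proof (intro conjI exI[of _ KK])
    show "is_morG E QQ ?C" by (rule Cm)
    show "is_morG QQ E KK" by (rule K_morG)
    show "\<forall>x\<in>Ob E. fo KK (fo ?C x) = x" by (simp add: Hob_def pt_def dec_enc fib_self)
    show "\<forall>f\<in>Ar E. fa KK (fa ?C f) = f"
    proof
      fix f assume f: "f \<in> Ar E"
      have "dec (Dom B (fa F f)) (pt (Dom TT (Har f))) = Dom E f"
        using fun_dom[OF Ff f] dec_enc[OF fib_self[OF gpd_dom[OF Eg f]]] by (simp add: Har_def Hob_def T_simps pt_def)
      then show "fa KK (fa ?C f) = f" using lift_uniq[OF f] by simp
    qed
    show "\<forall>p\<in>Ob QQ. fo ?C (fo KK p) = p"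
    proof
      fix p assume p: "p \<in> Ob QQ"
      obtain b y where by': "p = (b, y)" by (cases p)
      obtain a where c: "b \<in> Ob B" "y = (A b, A (invo B b), a, phi b)" "a \<in> A b"
        using pb_ob_char[OF p[unfolded by']] by blast
      have x: "dec b a \<in> fib b" using dec_mem[OF c(3)] .
      have "Hob (dec b a) = y" using c(2) fib_F[OF x] enc_dec[OF c(3)] by (simp add: Hob_def)
      then show "fo ?C (fo KK p) = p" using by' c(2) fib_F[OF x] by (simp add: pt_def)
    qed
    show "\<forall>q\<in>Ar QQ. fa ?C (fa KK q) = q"
    proof
      fix q assume q: "q \<in> Ar QQ"
      obtain u v where uv: "q = (u, v)" by (cases q)
      obtain a where c: "u \<in> Ar B" "a \<in> A (Dom B u)"
        "v = ((A (Dom B u), A (invo B (Dom B u)), a, phi (Dom B u)),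
            (A (Cod B u), A (invo B (Cod B u)), tr u a, phi (Cod B u)), tr u, tr (inva B u))"
        using pb_ar_char[OF q[unfolded uv]] by blast
      let ?x = "dec (Dom B u) a"
      have x: "?x \<in> fib (Dom B u)" using dec_mem[OF c(2)] .
      note l = lift_fib[OF x c(1)]
      have k: "fa KK q = lift u ?x" using uv c(3) by (simp add: T_simps pt_def)
      have "Har (lift u ?x) = v"
        using c(3) l fib_F[OF x] fib_F[OF l(4)] enc_dec[OF c(2)] tr_dec[OF c(2)]
        by (simp add: Har_def Hob_def)
      then show "fa ?C (fa KK q) = q" using uv l(3) k by simp
    qed
  qed
qed

end



theorem lemma4p26:
  fixes \<kappa> :: "'u rel"
    and E :: "('eo, 'ea) gpdG" and B :: "('bo, 'ba) gpdG"
    and F :: "('eo, 'ea, 'bo, 'ba) fnctr"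
  assumes "inaccessible \<kappa>"
    and "is_morG E B F"
  shows "is_pullback_of E B F (U_Delta_tilde \<kappa>) (U_Delta \<kappa>) p_Delta \<longleftrightarrow>
         (discrete_fibration E B F \<and> (\<forall>b\<in>Ob B. ordLess2 (card_of (fiber_obj E F b)) \<kappa>))"
proof
  assume "is_pullback_of E B F (U_Delta_tilde \<kappa>) (U_Delta \<kappa>) p_Delta"
  then show "discrete_fibration E B F \<and> (\<forall>b\<in>Ob B. ordLess2 (card_of (fiber_obj E F b)) \<kappa>)"
    by (rule forward)
next
  assume r: "discrete_fibration E B F \<and> (\<forall>b\<in>Ob B. ordLess2 (card_of (fiber_obj E F b)) \<kappa>)"
  have c: "Card_order \<kappa>" using assms(1) by (simp add: inaccessible_def)
  interpret bwd \<kappa> E B F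
    by unfold_locales (use r c assms(2) in auto)
  show "is_pullback_of E B F (U_Delta_tilde \<kappa>) (U_Delta \<kappa>) p_Delta"
    unfolding is_pullback_of_def using backward_square by blast
qed


end
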